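(* Let $\lambda_2,\lambda_3,\lambda_8,\lambda_9$ and $\mathfrak{k}_1=\mathrm{span}_{\mathbb{R}}(\lambda_1,\lambda_2,\lambda_3)$, $\mathfrak{k}_2=\mathrm{span}_{\mathbb{R}}(\lambda_8,\lambda_9,\lambda_{10})$ be as in the context, and let $\hat K:=\langle e^{\mathfrak{k}_1}\rangle\times\langle e^{\mathfrak{k}_2}\rangle$ (each factor isomorphic to $SU(2)$). Put $K_1=\{e^{x\lambda_3}:x\in[0,\pi]\}$, $A_1=\{e^{x\lambda_2}:x\in[0,\frac{\pi}{2}]\}$, $K_1'=\{e^{x\lambda_3}:x\in[0,2\pi]\}$, $K_2=\{e^{x\lambda_8}:x\in[0,\pi]\}$, $A_2=\{e^{x\lambda_9}:x\in[0,\frac{\pi}{2}]\}$, $K_2'=\{e^{x\lambda_8}:x\in[0,2\pi]\}$. Then, up to a measure zero set, $\hat K\simeq K_1A_1K_1'\times K_2A_2K_2'$ as manifolds; that is, the map $(\phi_1,\psi_1,\omega_1,\phi_2,\psi_2,\omega_2)\mapsto(e^{\phi_1\lambda_3}e^{\psi_1\lambda_2}e^{\omega_1\lambda_3},\,e^{\phi_2\lambda_8}e^{\psi_2\lambda_9}e^{\omega_2\lambda_8})$ from $[0,\pi]\times[0,\frac{\pi}{2}]\times[0,2\pi]\times[0,\pi]\times[0,\frac{\pi}{2}]\times[0,2\pi]$ to $\hat K$ is a diffeomorphism up to a set of measure zero.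
   Context: Let $A_{ab}$ ($1\le a,b\le 7$) denote the $7\times7$ real matrix with $+1$ in entry $(a,b)$, $-1$ in entry $(b,a)$ and zeros elsewhere. Define $\lambda_1=-A_{47}-A_{56}$, $\lambda_2=A_{46}-A_{57}$, $\lambda_3=-A_{45}-A_{67}$, $\lambda_8=-2A_{23}+A_{45}-A_{67}$, $\lambda_9=-2A_{12}+A_{47}-A_{56}$, $\lambda_{10}=-2A_{13}-A_{46}-A_{57}$. Here $\langle e^{\mathfrak{k}_i}\rangle$ denotes the subgroup of $GL(7,\mathbb{R})$ generated by $\exp(\mathfrak{k}_i)$. *)

theory Defs
  imports "HOL-Analysis.Analysis" "HOL-Library.Numeral_Type"
begin

type_synonym mat7 = "real^7^7"

text \<open>A_ab: +1 at entry (a,b), -1 at entry (b,a); indices 1..7 embedded into the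
  index type 7 via of_nat (injective on 1..7).\<close>
definition Aab :: "nat \<Rightarrow> nat \<Rightarrow> mat7" where
  "Aab a b = (\<chi> i j. (if i = of_nat a \<and> j = of_nat b then 1 else 0)
                    - (if i = of_nat b \<and> j = of_nat a then 1 else 0))"

definition lam1 :: mat7 where "lam1 = - Aab 4 7 - Aab 5 6"
definition lam2 :: mat7 where "lam2 = Aab 4 6 - Aab 5 7"
definition lam3 :: mat7 where "lam3 = - Aab 4 5 - Aab 6 7"
definition lam8 :: mat7 where "lam8 = - 2 *\<^sub>R Aab 2 3 + Aab 4 5 - Aab 6 7"
definition lam9 :: mat7 where "lam9 = - 2 *\<^sub>R Aab 1 2 + Aab 4 7 - Aab 5 6"
definition lam10 :: mat7 where "lam10 = - 2 *\<^sub>R Aab 1 3 - Aab 4 6 - Aab 5 7"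

fun mpow :: "mat7 \<Rightarrow> nat \<Rightarrow> mat7" where
  "mpow M 0 = mat 1"
| "mpow M (Suc n) = M ** mpow M n"

definition mexp :: "mat7 \<Rightarrow> mat7" where
  "mexp M = (\<Sum>n. (1 / fact n) *\<^sub>R mpow M n)"

definition k1 :: "mat7 set" where "k1 = span {lam1, lam2, lam3}"
definition k2 :: "mat7 set" where "k2 = span {lam8, lam9, lam10}"

inductive_set gen_group :: "mat7 set \<Rightarrow> mat7 set" for S where
  gen_one: "mat 1 \<in> gen_group S"
| gen_mul: "s \<in> S \<Longrightarrow> g \<in> gen_group S \<Longrightarrow> s ** g \<in> gen_group S"
| gen_inv: "s \<in> S \<Longrightarrow> g \<in> gen_group S \<Longrightarrow> matrix_inv s ** g \<in> gen_group S"

definition Khat :: "(mat7 \<times> mat7) set" where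
  "Khat = gen_group (mexp ` k1) \<times> gen_group (mexp ` k2)"

definition euler_map :: "real \<times> real \<times> real \<times> real \<times> real \<times> real \<Rightarrow> mat7 \<times> mat7" where
  "euler_map = (\<lambda>(p1, s1, w1, p2, s2, w2).
     (mexp (p1 *\<^sub>R lam3) ** mexp (s1 *\<^sub>R lam2) ** mexp (w1 *\<^sub>R lam3),
      mexp (p2 *\<^sub>R lam8) ** mexp (s2 *\<^sub>R lam9) ** mexp (w2 *\<^sub>R lam8)))"

definition param_box :: "(real \<times> real \<times> real \<times> real \<times> real \<times> real) set" where
  "param_box = {0..pi} \<times> {0..pi/2} \<times> {0..2*pi} \<times> {0..pi} \<times> {0..pi/2} \<times> {0..2*pi}"

end

theory Submission
  imports Defs
begin



lemma c7: "card ({0,1,2,3,4,5,6}::7 set) = CARD(7)" by simp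
lemma UNIV7: "(UNIV::7 set) = {0,1,2,3,4,5,6}"
  using c7 card_subset_eq[of UNIV "{0,1,2,3,4,5,6}::7 set"] by simp
lemma forall7: "(\<forall>i::7. P i) \<longleftrightarrow> P 0 \<and> P 1 \<and> P 2 \<and> P 3 \<and> P 4 \<and> P 5 \<and> P 6"
proof -
  have "(\<forall>i::7. P i) = (\<forall>i\<in>UNIV. P i)" by (simp only: ball_UNIV)
  also have "\<dots> = (\<forall>i\<in>{0,1,2,3,4,5,6}. P i)" by (simp only: UNIV7)
  also have "\<dots> = (P 0 \<and> P 1 \<and> P 2 \<and> P 3 \<and> P 4 \<and> P 5 \<and> P 6)" by (simp only: ball_simps simp_thms)
  finally show ?thesis .
qed

lemma sum7: "(\<Sum>i\<in>(UNIV::7 set). f i) = f 0 + f 1 + f 2 + f 3 + f 4 + f 5 + f 6"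
proof -
  have "(\<Sum>i\<in>(UNIV::7 set). f i) = (\<Sum>i\<in>{0,1,2,3,4,5,6}. f i)" by (simp only: UNIV7)
  also have "\<dots> = f 0 + (f 1 + (f 2 + (f 3 + (f 4 + (f 5 + f 6)))))"
    by (subst sum.insert, simp, simp)+ simp
  finally show ?thesis by (simp only: add.assoc)
qed

definition Pm :: mat7 where "Pm = (\<chi> i j. if i = j \<and> (i = 4 \<or> i = 5 \<or> i = 6 \<or> i = 0) then 1 else 0)"
definition Q0m :: mat7 where "Q0m = (\<chi> i j. if i = j \<and> (i = 1 \<or> i = 2 \<or> i = 3) then 1 else 0)"
definition B8 :: mat7 where "B8 = - Aab 2 3"
definition B9 :: mat7 where "B9 = - Aab 1 2"
definition B10 :: mat7 where "B10 = - Aab 1 3"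
definition C8 :: mat7 where "C8 = Aab 4 5 - Aab 6 7"
definition C9 :: mat7 where "C9 = Aab 4 7 - Aab 5 6"
definition C10 :: mat7 where "C10 = - Aab 4 6 - Aab 5 7"

lemma Pm_e[simp]:
  "Pm $ 1 $ 1 = 0"
  "Pm $ 1 $ 2 = 0"
  "Pm $ 1 $ 3 = 0"
  "Pm $ 1 $ 4 = 0"
  "Pm $ 1 $ 5 = 0"
  "Pm $ 1 $ 6 = 0"
  "Pm $ 1 $ 0 = 0"
  "Pm $ 2 $ 1 = 0"
  "Pm $ 2 $ 2 = 0"
  "Pm $ 2 $ 3 = 0"
  "Pm $ 2 $ 4 = 0"
  "Pm $ 2 $ 5 = 0"
  "Pm $ 2 $ 6 = 0"
  "Pm $ 2 $ 0 = 0"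
  "Pm $ 3 $ 1 = 0"
  "Pm $ 3 $ 2 = 0"
  "Pm $ 3 $ 3 = 0"
  "Pm $ 3 $ 4 = 0"
  "Pm $ 3 $ 5 = 0"
  "Pm $ 3 $ 6 = 0"
  "Pm $ 3 $ 0 = 0"
  "Pm $ 4 $ 1 = 0"
  "Pm $ 4 $ 2 = 0"
  "Pm $ 4 $ 3 = 0"
  "Pm $ 4 $ 4 = 1"
  "Pm $ 4 $ 5 = 0"
  "Pm $ 4 $ 6 = 0"
  "Pm $ 4 $ 0 = 0"
  "Pm $ 5 $ 1 = 0"
  "Pm $ 5 $ 2 = 0"
  "Pm $ 5 $ 3 = 0"
  "Pm $ 5 $ 4 = 0"
  "Pm $ 5 $ 5 = 1"
  "Pm $ 5 $ 6 = 0"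
  "Pm $ 5 $ 0 = 0"
  "Pm $ 6 $ 1 = 0"
  "Pm $ 6 $ 2 = 0"
  "Pm $ 6 $ 3 = 0"
  "Pm $ 6 $ 4 = 0"
  "Pm $ 6 $ 5 = 0"
  "Pm $ 6 $ 6 = 1"
  "Pm $ 6 $ 0 = 0"
  "Pm $ 0 $ 1 = 0"
  "Pm $ 0 $ 2 = 0"
  "Pm $ 0 $ 3 = 0"
  "Pm $ 0 $ 4 = 0"
  "Pm $ 0 $ 5 = 0"
  "Pm $ 0 $ 6 = 0"
  "Pm $ 0 $ 0 = 1"
  by (simp_all add: Pm_def)

lemma Q0m_e[simp]:
  "Q0m $ 1 $ 1 = 1"
  "Q0m $ 1 $ 2 = 0"
  "Q0m $ 1 $ 3 = 0"
  "Q0m $ 1 $ 4 = 0"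
  "Q0m $ 1 $ 5 = 0"
  "Q0m $ 1 $ 6 = 0"
  "Q0m $ 1 $ 0 = 0"
  "Q0m $ 2 $ 1 = 0"
  "Q0m $ 2 $ 2 = 1"
  "Q0m $ 2 $ 3 = 0"
  "Q0m $ 2 $ 4 = 0"
  "Q0m $ 2 $ 5 = 0"
  "Q0m $ 2 $ 6 = 0"
  "Q0m $ 2 $ 0 = 0"
  "Q0m $ 3 $ 1 = 0"
  "Q0m $ 3 $ 2 = 0"
  "Q0m $ 3 $ 3 = 1"
  "Q0m $ 3 $ 4 = 0"
  "Q0m $ 3 $ 5 = 0"
  "Q0m $ 3 $ 6 = 0"
  "Q0m $ 3 $ 0 = 0"
  "Q0m $ 4 $ 1 = 0"
  "Q0m $ 4 $ 2 = 0"
  "Q0m $ 4 $ 3 = 0"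
  "Q0m $ 4 $ 4 = 0"
  "Q0m $ 4 $ 5 = 0"
  "Q0m $ 4 $ 6 = 0"
  "Q0m $ 4 $ 0 = 0"
  "Q0m $ 5 $ 1 = 0"
  "Q0m $ 5 $ 2 = 0"
  "Q0m $ 5 $ 3 = 0"
  "Q0m $ 5 $ 4 = 0"
  "Q0m $ 5 $ 5 = 0"
  "Q0m $ 5 $ 6 = 0"
  "Q0m $ 5 $ 0 = 0"
  "Q0m $ 6 $ 1 = 0"
  "Q0m $ 6 $ 2 = 0"
  "Q0m $ 6 $ 3 = 0"
  "Q0m $ 6 $ 4 = 0"
  "Q0m $ 6 $ 5 = 0"
  "Q0m $ 6 $ 6 = 0"
  "Q0m $ 6 $ 0 = 0"
  "Q0m $ 0 $ 1 = 0"
  "Q0m $ 0 $ 2 = 0"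
  "Q0m $ 0 $ 3 = 0"
  "Q0m $ 0 $ 4 = 0"
  "Q0m $ 0 $ 5 = 0"
  "Q0m $ 0 $ 6 = 0"
  "Q0m $ 0 $ 0 = 0"
  by (simp_all add: Q0m_def)

lemma lam1_e[simp]:
  "lam1 $ 1 $ 1 = 0"
  "lam1 $ 1 $ 2 = 0"
  "lam1 $ 1 $ 3 = 0"
  "lam1 $ 1 $ 4 = 0"
  "lam1 $ 1 $ 5 = 0"
  "lam1 $ 1 $ 6 = 0"
  "lam1 $ 1 $ 0 = 0"
  "lam1 $ 2 $ 1 = 0"
  "lam1 $ 2 $ 2 = 0"
  "lam1 $ 2 $ 3 = 0"
  "lam1 $ 2 $ 4 = 0"
  "lam1 $ 2 $ 5 = 0"
  "lam1 $ 2 $ 6 = 0"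
  "lam1 $ 2 $ 0 = 0"
  "lam1 $ 3 $ 1 = 0"
  "lam1 $ 3 $ 2 = 0"
  "lam1 $ 3 $ 3 = 0"
  "lam1 $ 3 $ 4 = 0"
  "lam1 $ 3 $ 5 = 0"
  "lam1 $ 3 $ 6 = 0"
  "lam1 $ 3 $ 0 = 0"
  "lam1 $ 4 $ 1 = 0"
  "lam1 $ 4 $ 2 = 0"
  "lam1 $ 4 $ 3 = 0"
  "lam1 $ 4 $ 4 = 0"
  "lam1 $ 4 $ 5 = 0"
  "lam1 $ 4 $ 6 = 0"
  "lam1 $ 4 $ 0 = - 1"
  "lam1 $ 5 $ 1 = 0"
  "lam1 $ 5 $ 2 = 0"
  "lam1 $ 5 $ 3 = 0"
  "lam1 $ 5 $ 4 = 0"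
  "lam1 $ 5 $ 5 = 0"
  "lam1 $ 5 $ 6 = - 1"
  "lam1 $ 5 $ 0 = 0"
  "lam1 $ 6 $ 1 = 0"
  "lam1 $ 6 $ 2 = 0"
  "lam1 $ 6 $ 3 = 0"
  "lam1 $ 6 $ 4 = 0"
  "lam1 $ 6 $ 5 = 1"
  "lam1 $ 6 $ 6 = 0"
  "lam1 $ 6 $ 0 = 0"
  "lam1 $ 0 $ 1 = 0"
  "lam1 $ 0 $ 2 = 0"
  "lam1 $ 0 $ 3 = 0"
  "lam1 $ 0 $ 4 = 1"
  "lam1 $ 0 $ 5 = 0"
  "lam1 $ 0 $ 6 = 0"
  "lam1 $ 0 $ 0 = 0"
  by (simp_all add: lam1_def Aab_def)

lemma lam2_e[simp]:
  "lam2 $ 1 $ 1 = 0"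
  "lam2 $ 1 $ 2 = 0"
  "lam2 $ 1 $ 3 = 0"
  "lam2 $ 1 $ 4 = 0"
  "lam2 $ 1 $ 5 = 0"
  "lam2 $ 1 $ 6 = 0"
  "lam2 $ 1 $ 0 = 0"
  "lam2 $ 2 $ 1 = 0"
  "lam2 $ 2 $ 2 = 0"
  "lam2 $ 2 $ 3 = 0"
  "lam2 $ 2 $ 4 = 0"
  "lam2 $ 2 $ 5 = 0"
  "lam2 $ 2 $ 6 = 0"
  "lam2 $ 2 $ 0 = 0"
  "lam2 $ 3 $ 1 = 0"
  "lam2 $ 3 $ 2 = 0"
  "lam2 $ 3 $ 3 = 0"
  "lam2 $ 3 $ 4 = 0"
  "lam2 $ 3 $ 5 = 0"
  "lam2 $ 3 $ 6 = 0"
  "lam2 $ 3 $ 0 = 0"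
  "lam2 $ 4 $ 1 = 0"
  "lam2 $ 4 $ 2 = 0"
  "lam2 $ 4 $ 3 = 0"
  "lam2 $ 4 $ 4 = 0"
  "lam2 $ 4 $ 5 = 0"
  "lam2 $ 4 $ 6 = 1"
  "lam2 $ 4 $ 0 = 0"
  "lam2 $ 5 $ 1 = 0"
  "lam2 $ 5 $ 2 = 0"
  "lam2 $ 5 $ 3 = 0"
  "lam2 $ 5 $ 4 = 0"
  "lam2 $ 5 $ 5 = 0"
  "lam2 $ 5 $ 6 = 0"
  "lam2 $ 5 $ 0 = - 1"
  "lam2 $ 6 $ 1 = 0"
  "lam2 $ 6 $ 2 = 0"
  "lam2 $ 6 $ 3 = 0"
  "lam2 $ 6 $ 4 = - 1"
  "lam2 $ 6 $ 5 = 0"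
  "lam2 $ 6 $ 6 = 0"
  "lam2 $ 6 $ 0 = 0"
  "lam2 $ 0 $ 1 = 0"
  "lam2 $ 0 $ 2 = 0"
  "lam2 $ 0 $ 3 = 0"
  "lam2 $ 0 $ 4 = 0"
  "lam2 $ 0 $ 5 = 1"
  "lam2 $ 0 $ 6 = 0"
  "lam2 $ 0 $ 0 = 0"
  by (simp_all add: lam2_def Aab_def)

lemma lam3_e[simp]:
  "lam3 $ 1 $ 1 = 0"
  "lam3 $ 1 $ 2 = 0"
  "lam3 $ 1 $ 3 = 0"
  "lam3 $ 1 $ 4 = 0"
  "lam3 $ 1 $ 5 = 0"
  "lam3 $ 1 $ 6 = 0"
  "lam3 $ 1 $ 0 = 0"
  "lam3 $ 2 $ 1 = 0"
  "lam3 $ 2 $ 2 = 0"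
  "lam3 $ 2 $ 3 = 0"
  "lam3 $ 2 $ 4 = 0"
  "lam3 $ 2 $ 5 = 0"
  "lam3 $ 2 $ 6 = 0"
  "lam3 $ 2 $ 0 = 0"
  "lam3 $ 3 $ 1 = 0"
  "lam3 $ 3 $ 2 = 0"
  "lam3 $ 3 $ 3 = 0"
  "lam3 $ 3 $ 4 = 0"
  "lam3 $ 3 $ 5 = 0"
  "lam3 $ 3 $ 6 = 0"
  "lam3 $ 3 $ 0 = 0"
  "lam3 $ 4 $ 1 = 0"
  "lam3 $ 4 $ 2 = 0"
  "lam3 $ 4 $ 3 = 0"
  "lam3 $ 4 $ 4 = 0"
  "lam3 $ 4 $ 5 = - 1"
  "lam3 $ 4 $ 6 = 0"
  "lam3 $ 4 $ 0 = 0"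
  "lam3 $ 5 $ 1 = 0"
  "lam3 $ 5 $ 2 = 0"
  "lam3 $ 5 $ 3 = 0"
  "lam3 $ 5 $ 4 = 1"
  "lam3 $ 5 $ 5 = 0"
  "lam3 $ 5 $ 6 = 0"
  "lam3 $ 5 $ 0 = 0"
  "lam3 $ 6 $ 1 = 0"
  "lam3 $ 6 $ 2 = 0"
  "lam3 $ 6 $ 3 = 0"
  "lam3 $ 6 $ 4 = 0"
  "lam3 $ 6 $ 5 = 0"
  "lam3 $ 6 $ 6 = 0"
  "lam3 $ 6 $ 0 = - 1"
  "lam3 $ 0 $ 1 = 0"
  "lam3 $ 0 $ 2 = 0"
  "lam3 $ 0 $ 3 = 0"
  "lam3 $ 0 $ 4 = 0"
  "lam3 $ 0 $ 5 = 0"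
  "lam3 $ 0 $ 6 = 1"
  "lam3 $ 0 $ 0 = 0"
  by (simp_all add: lam3_def Aab_def)

lemma B8_e[simp]:
  "B8 $ 1 $ 1 = 0"
  "B8 $ 1 $ 2 = 0"
  "B8 $ 1 $ 3 = 0"
  "B8 $ 1 $ 4 = 0"
  "B8 $ 1 $ 5 = 0"
  "B8 $ 1 $ 6 = 0"
  "B8 $ 1 $ 0 = 0"
  "B8 $ 2 $ 1 = 0"
  "B8 $ 2 $ 2 = 0"
  "B8 $ 2 $ 3 = - 1"
  "B8 $ 2 $ 4 = 0"
  "B8 $ 2 $ 5 = 0"
  "B8 $ 2 $ 6 = 0"
  "B8 $ 2 $ 0 = 0"
  "B8 $ 3 $ 1 = 0"
  "B8 $ 3 $ 2 = 1"
  "B8 $ 3 $ 3 = 0"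
  "B8 $ 3 $ 4 = 0"
  "B8 $ 3 $ 5 = 0"
  "B8 $ 3 $ 6 = 0"
  "B8 $ 3 $ 0 = 0"
  "B8 $ 4 $ 1 = 0"
  "B8 $ 4 $ 2 = 0"
  "B8 $ 4 $ 3 = 0"
  "B8 $ 4 $ 4 = 0"
  "B8 $ 4 $ 5 = 0"
  "B8 $ 4 $ 6 = 0"
  "B8 $ 4 $ 0 = 0"
  "B8 $ 5 $ 1 = 0"
  "B8 $ 5 $ 2 = 0"
  "B8 $ 5 $ 3 = 0"
  "B8 $ 5 $ 4 = 0"
  "B8 $ 5 $ 5 = 0"
  "B8 $ 5 $ 6 = 0"
  "B8 $ 5 $ 0 = 0"
  "B8 $ 6 $ 1 = 0"
  "B8 $ 6 $ 2 = 0"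
  "B8 $ 6 $ 3 = 0"
  "B8 $ 6 $ 4 = 0"
  "B8 $ 6 $ 5 = 0"
  "B8 $ 6 $ 6 = 0"
  "B8 $ 6 $ 0 = 0"
  "B8 $ 0 $ 1 = 0"
  "B8 $ 0 $ 2 = 0"
  "B8 $ 0 $ 3 = 0"
  "B8 $ 0 $ 4 = 0"
  "B8 $ 0 $ 5 = 0"
  "B8 $ 0 $ 6 = 0"
  "B8 $ 0 $ 0 = 0"
  by (simp_all add: B8_def Aab_def)

lemma B9_e[simp]:
  "B9 $ 1 $ 1 = 0"
  "B9 $ 1 $ 2 = - 1"
  "B9 $ 1 $ 3 = 0"
  "B9 $ 1 $ 4 = 0"
  "B9 $ 1 $ 5 = 0"
  "B9 $ 1 $ 6 = 0"
  "B9 $ 1 $ 0 = 0"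
  "B9 $ 2 $ 1 = 1"
  "B9 $ 2 $ 2 = 0"
  "B9 $ 2 $ 3 = 0"
  "B9 $ 2 $ 4 = 0"
  "B9 $ 2 $ 5 = 0"
  "B9 $ 2 $ 6 = 0"
  "B9 $ 2 $ 0 = 0"
  "B9 $ 3 $ 1 = 0"
  "B9 $ 3 $ 2 = 0"
  "B9 $ 3 $ 3 = 0"
  "B9 $ 3 $ 4 = 0"
  "B9 $ 3 $ 5 = 0"
  "B9 $ 3 $ 6 = 0"
  "B9 $ 3 $ 0 = 0"
  "B9 $ 4 $ 1 = 0"
  "B9 $ 4 $ 2 = 0"
  "B9 $ 4 $ 3 = 0"
  "B9 $ 4 $ 4 = 0"
  "B9 $ 4 $ 5 = 0"
  "B9 $ 4 $ 6 = 0"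
  "B9 $ 4 $ 0 = 0"
  "B9 $ 5 $ 1 = 0"
  "B9 $ 5 $ 2 = 0"
  "B9 $ 5 $ 3 = 0"
  "B9 $ 5 $ 4 = 0"
  "B9 $ 5 $ 5 = 0"
  "B9 $ 5 $ 6 = 0"
  "B9 $ 5 $ 0 = 0"
  "B9 $ 6 $ 1 = 0"
  "B9 $ 6 $ 2 = 0"
  "B9 $ 6 $ 3 = 0"
  "B9 $ 6 $ 4 = 0"
  "B9 $ 6 $ 5 = 0"
  "B9 $ 6 $ 6 = 0"
  "B9 $ 6 $ 0 = 0"
  "B9 $ 0 $ 1 = 0"
  "B9 $ 0 $ 2 = 0"
  "B9 $ 0 $ 3 = 0"
  "B9 $ 0 $ 4 = 0"
  "B9 $ 0 $ 5 = 0"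
  "B9 $ 0 $ 6 = 0"
  "B9 $ 0 $ 0 = 0"
  by (simp_all add: B9_def Aab_def)

lemma B10_e[simp]:
  "B10 $ 1 $ 1 = 0"
  "B10 $ 1 $ 2 = 0"
  "B10 $ 1 $ 3 = - 1"
  "B10 $ 1 $ 4 = 0"
  "B10 $ 1 $ 5 = 0"
  "B10 $ 1 $ 6 = 0"
  "B10 $ 1 $ 0 = 0"
  "B10 $ 2 $ 1 = 0"
  "B10 $ 2 $ 2 = 0"
  "B10 $ 2 $ 3 = 0"
  "B10 $ 2 $ 4 = 0"
  "B10 $ 2 $ 5 = 0"
  "B10 $ 2 $ 6 = 0"
  "B10 $ 2 $ 0 = 0"
  "B10 $ 3 $ 1 = 1"
  "B10 $ 3 $ 2 = 0"
  "B10 $ 3 $ 3 = 0"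
  "B10 $ 3 $ 4 = 0"
  "B10 $ 3 $ 5 = 0"
  "B10 $ 3 $ 6 = 0"
  "B10 $ 3 $ 0 = 0"
  "B10 $ 4 $ 1 = 0"
  "B10 $ 4 $ 2 = 0"
  "B10 $ 4 $ 3 = 0"
  "B10 $ 4 $ 4 = 0"
  "B10 $ 4 $ 5 = 0"
  "B10 $ 4 $ 6 = 0"
  "B10 $ 4 $ 0 = 0"
  "B10 $ 5 $ 1 = 0"
  "B10 $ 5 $ 2 = 0"
  "B10 $ 5 $ 3 = 0"
  "B10 $ 5 $ 4 = 0"
  "B10 $ 5 $ 5 = 0"
  "B10 $ 5 $ 6 = 0"
  "B10 $ 5 $ 0 = 0"
  "B10 $ 6 $ 1 = 0"
  "B10 $ 6 $ 2 = 0"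
  "B10 $ 6 $ 3 = 0"
  "B10 $ 6 $ 4 = 0"
  "B10 $ 6 $ 5 = 0"
  "B10 $ 6 $ 6 = 0"
  "B10 $ 6 $ 0 = 0"
  "B10 $ 0 $ 1 = 0"
  "B10 $ 0 $ 2 = 0"
  "B10 $ 0 $ 3 = 0"
  "B10 $ 0 $ 4 = 0"
  "B10 $ 0 $ 5 = 0"
  "B10 $ 0 $ 6 = 0"
  "B10 $ 0 $ 0 = 0"
  by (simp_all add: B10_def Aab_def)

lemma C8_e[simp]:
  "C8 $ 1 $ 1 = 0"
  "C8 $ 1 $ 2 = 0"
  "C8 $ 1 $ 3 = 0"
  "C8 $ 1 $ 4 = 0"
  "C8 $ 1 $ 5 = 0"
  "C8 $ 1 $ 6 = 0"
  "C8 $ 1 $ 0 = 0"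
  "C8 $ 2 $ 1 = 0"
  "C8 $ 2 $ 2 = 0"
  "C8 $ 2 $ 3 = 0"
  "C8 $ 2 $ 4 = 0"
  "C8 $ 2 $ 5 = 0"
  "C8 $ 2 $ 6 = 0"
  "C8 $ 2 $ 0 = 0"
  "C8 $ 3 $ 1 = 0"
  "C8 $ 3 $ 2 = 0"
  "C8 $ 3 $ 3 = 0"
  "C8 $ 3 $ 4 = 0"
  "C8 $ 3 $ 5 = 0"
  "C8 $ 3 $ 6 = 0"
  "C8 $ 3 $ 0 = 0"
  "C8 $ 4 $ 1 = 0"
  "C8 $ 4 $ 2 = 0"
  "C8 $ 4 $ 3 = 0"
  "C8 $ 4 $ 4 = 0"
  "C8 $ 4 $ 5 = 1"
  "C8 $ 4 $ 6 = 0"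
  "C8 $ 4 $ 0 = 0"
  "C8 $ 5 $ 1 = 0"
  "C8 $ 5 $ 2 = 0"
  "C8 $ 5 $ 3 = 0"
  "C8 $ 5 $ 4 = - 1"
  "C8 $ 5 $ 5 = 0"
  "C8 $ 5 $ 6 = 0"
  "C8 $ 5 $ 0 = 0"
  "C8 $ 6 $ 1 = 0"
  "C8 $ 6 $ 2 = 0"
  "C8 $ 6 $ 3 = 0"
  "C8 $ 6 $ 4 = 0"
  "C8 $ 6 $ 5 = 0"
  "C8 $ 6 $ 6 = 0"
  "C8 $ 6 $ 0 = - 1"
  "C8 $ 0 $ 1 = 0"
  "C8 $ 0 $ 2 = 0"
  "C8 $ 0 $ 3 = 0"
  "C8 $ 0 $ 4 = 0"
  "C8 $ 0 $ 5 = 0"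
  "C8 $ 0 $ 6 = 1"
  "C8 $ 0 $ 0 = 0"
  by (simp_all add: C8_def Aab_def)

lemma C9_e[simp]:
  "C9 $ 1 $ 1 = 0"
  "C9 $ 1 $ 2 = 0"
  "C9 $ 1 $ 3 = 0"
  "C9 $ 1 $ 4 = 0"
  "C9 $ 1 $ 5 = 0"
  "C9 $ 1 $ 6 = 0"
  "C9 $ 1 $ 0 = 0"
  "C9 $ 2 $ 1 = 0"
  "C9 $ 2 $ 2 = 0"
  "C9 $ 2 $ 3 = 0"
  "C9 $ 2 $ 4 = 0"
  "C9 $ 2 $ 5 = 0"
  "C9 $ 2 $ 6 = 0"
  "C9 $ 2 $ 0 = 0"
  "C9 $ 3 $ 1 = 0"
  "C9 $ 3 $ 2 = 0"
  "C9 $ 3 $ 3 = 0"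
  "C9 $ 3 $ 4 = 0"
  "C9 $ 3 $ 5 = 0"
  "C9 $ 3 $ 6 = 0"
  "C9 $ 3 $ 0 = 0"
  "C9 $ 4 $ 1 = 0"
  "C9 $ 4 $ 2 = 0"
  "C9 $ 4 $ 3 = 0"
  "C9 $ 4 $ 4 = 0"
  "C9 $ 4 $ 5 = 0"
  "C9 $ 4 $ 6 = 0"
  "C9 $ 4 $ 0 = 1"
  "C9 $ 5 $ 1 = 0"
  "C9 $ 5 $ 2 = 0"
  "C9 $ 5 $ 3 = 0"
  "C9 $ 5 $ 4 = 0"
  "C9 $ 5 $ 5 = 0"
  "C9 $ 5 $ 6 = - 1"
  "C9 $ 5 $ 0 = 0"
  "C9 $ 6 $ 1 = 0"
  "C9 $ 6 $ 2 = 0"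
  "C9 $ 6 $ 3 = 0"
  "C9 $ 6 $ 4 = 0"
  "C9 $ 6 $ 5 = 1"
  "C9 $ 6 $ 6 = 0"
  "C9 $ 6 $ 0 = 0"
  "C9 $ 0 $ 1 = 0"
  "C9 $ 0 $ 2 = 0"
  "C9 $ 0 $ 3 = 0"
  "C9 $ 0 $ 4 = - 1"
  "C9 $ 0 $ 5 = 0"
  "C9 $ 0 $ 6 = 0"
  "C9 $ 0 $ 0 = 0"
  by (simp_all add: C9_def Aab_def)

lemma C10_e[simp]:
  "C10 $ 1 $ 1 = 0"
  "C10 $ 1 $ 2 = 0"
  "C10 $ 1 $ 3 = 0"
  "C10 $ 1 $ 4 = 0"
  "C10 $ 1 $ 5 = 0"
  "C10 $ 1 $ 6 = 0"
  "C10 $ 1 $ 0 = 0"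
  "C10 $ 2 $ 1 = 0"
  "C10 $ 2 $ 2 = 0"
  "C10 $ 2 $ 3 = 0"
  "C10 $ 2 $ 4 = 0"
  "C10 $ 2 $ 5 = 0"
  "C10 $ 2 $ 6 = 0"
  "C10 $ 2 $ 0 = 0"
  "C10 $ 3 $ 1 = 0"
  "C10 $ 3 $ 2 = 0"
  "C10 $ 3 $ 3 = 0"
  "C10 $ 3 $ 4 = 0"
  "C10 $ 3 $ 5 = 0"
  "C10 $ 3 $ 6 = 0"
  "C10 $ 3 $ 0 = 0"
  "C10 $ 4 $ 1 = 0"
  "C10 $ 4 $ 2 = 0"
  "C10 $ 4 $ 3 = 0"
  "C10 $ 4 $ 4 = 0"
  "C10 $ 4 $ 5 = 0"
  "C10 $ 4 $ 6 = - 1"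
  "C10 $ 4 $ 0 = 0"
  "C10 $ 5 $ 1 = 0"
  "C10 $ 5 $ 2 = 0"
  "C10 $ 5 $ 3 = 0"
  "C10 $ 5 $ 4 = 0"
  "C10 $ 5 $ 5 = 0"
  "C10 $ 5 $ 6 = 0"
  "C10 $ 5 $ 0 = - 1"
  "C10 $ 6 $ 1 = 0"
  "C10 $ 6 $ 2 = 0"
  "C10 $ 6 $ 3 = 0"
  "C10 $ 6 $ 4 = 1"
  "C10 $ 6 $ 5 = 0"
  "C10 $ 6 $ 6 = 0"
  "C10 $ 6 $ 0 = 0"
  "C10 $ 0 $ 1 = 0"
  "C10 $ 0 $ 2 = 0"
  "C10 $ 0 $ 3 = 0"
  "C10 $ 0 $ 4 = 0"
  "C10 $ 0 $ 5 = 1"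
  "C10 $ 0 $ 6 = 0"
  "C10 $ 0 $ 0 = 0"
  by (simp_all add: C10_def Aab_def)


lemma matrix_add_rdistrib7: "((A::mat7) + B) ** C = A ** C + B ** C"
  by (simp add: matrix_matrix_mult_def vec_eq_iff sum.distrib algebra_simps)

lemma matrix_neg_left7: "(- (A::mat7)) ** C = - (A ** C)"
  by (simp add: matrix_matrix_mult_def vec_eq_iff sum_negf)

lemma mpow_scale: "mpow (t *\<^sub>R N) n = t^n *\<^sub>R mpow N n"
  by (induction n) (simp_all add: matrix_scalar_ac scalar_matrix_assoc[symmetric])

lemma mpow_cube:
  assumes "N ** (N ** N) = - N"
  shows "mpow N (2*k+1) = (-1)^k *\<^sub>R N \<and> mpow N (2*k+2) = (-1)^k *\<^sub>R (N ** N)"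
proof (induction k)
  case 0
  then show ?case by simp
next
  case (Suc k)
  have IH1: "mpow N (2*k+1) = (-1)^k *\<^sub>R N" and IH2: "mpow N (2*k+2) = (-1)^k *\<^sub>R (N ** N)"
    using Suc by auto
  have e1: "2 * Suc k + 1 = Suc (Suc (2*k+1))" by simp
  have e2: "2 * Suc k + 2 = Suc (Suc (2*k+2))" by simp
  have "mpow N (2 * Suc k + 1) = N ** (N ** mpow N (2*k+1))" by (simp only: e1 mpow.simps)
  also have "\<dots> = (-1)^k *\<^sub>R (N ** (N ** N))" unfolding IH1 by (simp add: matrix_scalar_ac scalar_matrix_assoc[symmetric])
  also have "\<dots> = (-1)^(Suc k) *\<^sub>R N" using assms by simp
  finally have A: "mpow N (2 * Suc k + 1) = (-1)^(Suc k) *\<^sub>R N" .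
  have "mpow N (2 * Suc k + 2) = N ** (N ** mpow N (2*k+2))" by (simp only: e2 mpow.simps)
  also have "\<dots> = (-1)^k *\<^sub>R (N ** (N ** N) ** N)" unfolding IH2 by (simp add: matrix_scalar_ac scalar_matrix_assoc[symmetric] matrix_mul_assoc)
  also have "\<dots> = (-1)^(Suc k) *\<^sub>R (N ** N)" using assms by (simp add: matrix_neg_left7)
  finally show ?case using A by simp
qed

lemma mexp_term:
  assumes "N ** (N ** N) = - N"
  shows "(1 / fact n) *\<^sub>R mpow (t *\<^sub>R N) n =
     (if n = 0 then mat 1 else 0) + (sin_coeff n * t^n) *\<^sub>R N
     + ((if n = 0 then 1 else 0) - cos_coeff n * t^n) *\<^sub>R (N ** N)"
proof (cases "n = 0")
  case True
  then show ?thesis by (simp add: cos_coeff_def)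
next
  case False
  show ?thesis
  proof (cases "even n")
    case True
    then obtain m where m: "n = 2*m" by (rule evenE)
    define k where "k = m - 1"
    have k: "n = 2*k+2" using m False unfolding k_def by simp
    have c: "mpow N (2*k+2) = (-1)^k *\<^sub>R (N ** N)" by (rule conjunct2[OF mpow_cube[OF assms]])
    have d: "mpow (t *\<^sub>R N) n = t^n *\<^sub>R ((-1)^k *\<^sub>R (N ** N))" by (simp only: mpow_scale k c)
    have ev: "even n" "n div 2 = Suc k" using k by auto
    show ?thesis unfolding d using False ev by (simp add: sin_coeff_def cos_coeff_def)
  next
    case odd: False
    then obtain k where k: "n = 2*k+1" using oddE by blast
    have c: "mpow N (2*k+1) = (-1)^k *\<^sub>R N" by (rule conjunct1[OF mpow_cube[OF assms]])
    have d: "mpow (t *\<^sub>R N) n = t^n *\<^sub>R ((-1)^k *\<^sub>R N)" by (simp only: mpow_scale k c)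
    have ev: "odd n" "(n - Suc 0) div 2 = k" using k by auto
    show ?thesis unfolding d using False ev by (simp add: sin_coeff_def cos_coeff_def)
  qed
qed

lemma mexp_sums:
  assumes "N ** (N ** N) = - N"
  shows "(\<lambda>n. (1 / fact n) *\<^sub>R mpow (t *\<^sub>R N) n) sums (mat 1 + sin t *\<^sub>R N + (1 - cos t) *\<^sub>R (N ** N))"
proof -
  have s0: "(\<lambda>n. if n = 0 then mat 1 else (0::mat7)) sums mat 1"
    using sums_single[of 0 "\<lambda>_. mat 1 :: mat7"] by simp
  have s1: "(\<lambda>n. (sin_coeff n * t^n) *\<^sub>R N) sums (sin t *\<^sub>R N)"
    using sums_scaleR_left[OF sin_converges[of t], of N] by simp
  have s2': "(\<lambda>n. (if n = 0 then 1 else 0) - cos_coeff n * t^n) sums (1 - cos t)"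
    using sums_diff[OF sums_single[of 0 "\<lambda>_. 1::real"] cos_converges[of t]] by simp
  have s2: "(\<lambda>n. ((if n = 0 then 1 else 0) - cos_coeff n * t^n) *\<^sub>R (N ** N)) sums ((1 - cos t) *\<^sub>R (N ** N))"
    by (rule sums_scaleR_left[OF s2'])
  show ?thesis unfolding mexp_term[OF assms]
    using sums_add[OF sums_add[OF s0 s1] s2] by simp
qed

lemma mexp_cube:
  assumes "N ** (N ** N) = - N"
  shows "mexp (t *\<^sub>R N) = mat 1 + sin t *\<^sub>R N + (1 - cos t) *\<^sub>R (N ** N)"
  unfolding mexp_def using sums_unique[OF mexp_sums[OF assms]] by simp

lemma mpow_split:
  assumes "X ** Y = 0" "Y ** X = 0"
  shows "mpow (X + Y) (Suc n) = mpow X (Suc n) + mpow Y (Suc n)"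
proof (induction n)
  case 0
  then show ?case by simp
next
  case (Suc n)
  have a: "X ** (Y ** mpow Y n) = 0" using assms by (simp add: matrix_mul_assoc)
  have b: "Y ** (X ** mpow X n) = 0" using assms by (simp add: matrix_mul_assoc)
  have "mpow (X + Y) (Suc (Suc n)) = (X + Y) ** (mpow X (Suc n) + mpow Y (Suc n))"
    using Suc by simp
  also have "\<dots> = X ** mpow X (Suc n) + Y ** mpow Y (Suc n)"
    by (simp add: matrix_add_ldistrib matrix_add_rdistrib7 a b)
  finally show ?case by simp
qed

lemma mexp_split_sums:
  assumes "X ** Y = 0" "Y ** X = 0"
    and "(\<lambda>n. (1 / fact n) *\<^sub>R mpow X n) sums EXX"
    and "(\<lambda>n. (1 / fact n) *\<^sub>R mpow Y n) sums EYY"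
  shows "mexp (X + Y) = EXX + EYY - mat 1"
proof -
  have s0: "(\<lambda>n. if n = 0 then mat 1 else (0::mat7)) sums mat 1"
    using sums_single[of 0 "\<lambda>_. mat 1 :: mat7"] by simp
  have eq: "(\<lambda>n. (1 / fact n) *\<^sub>R mpow (X + Y) n) =
     (\<lambda>n. (1 / fact n) *\<^sub>R mpow X n + (1 / fact n) *\<^sub>R mpow Y n - (if n = 0 then mat 1 else 0))"
  proof
    fix n show "(1 / fact n) *\<^sub>R mpow (X + Y) n =
       (1 / fact n) *\<^sub>R mpow X n + (1 / fact n) *\<^sub>R mpow Y n - (if n = 0 then mat 1 else 0)"
      by (cases n) (simp, simp only: mpow_split[OF assms(1,2)] scaleR_add_right, simp)
  qed
  show ?thesis unfolding mexp_def eq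
    using sums_unique[OF sums_diff[OF sums_add[OF assms(3,4)] s0]] by simp
qed


definition L1 :: "real \<times> real \<times> real \<times> real \<Rightarrow> mat7" where
  "L1 = (\<lambda>(a,b,c,d). Q0m + a *\<^sub>R Pm + b *\<^sub>R lam1 + c *\<^sub>R lam2 + d *\<^sub>R lam3)"

definition qm :: "real \<times> real \<times> real \<times> real \<Rightarrow> real \<times> real \<times> real \<times> real \<Rightarrow> real \<times> real \<times> real \<times> real" where
  "qm = (\<lambda>(a0,a1,a2,a3) (b0,b1,b2,b3). (a0*b0-a1*b1-a2*b2-a3*b3, a0*b1+a1*b0+a2*b3-a3*b2, a0*b2-a1*b3+a2*b0+a3*b1, a0*b3+a1*b2-a2*b1+a3*b0))"

definition S11 :: mat7 where "S11 = B8 ** B8"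
definition S22 :: mat7 where "S22 = B9 ** B9"
definition S33 :: mat7 where "S33 = B10 ** B10"
definition S12 :: mat7 where "S12 = B8 ** B9 + B9 ** B8"
definition S13 :: mat7 where "S13 = B8 ** B10 + B10 ** B8"
definition S23 :: mat7 where "S23 = B9 ** B10 + B10 ** B9"

definition Phi :: "real \<times> real \<times> real \<times> real \<Rightarrow> mat7" where
  "Phi = (\<lambda>(a,b,c,d). (a*a+b*b+c*c+d*d) *\<^sub>R Q0m + (2*a*b) *\<^sub>R B8 + (2*a*c) *\<^sub>R B9 + (2*a*d) *\<^sub>R B10
     + (2*b*b) *\<^sub>R S11 + (2*c*c) *\<^sub>R S22 + (2*d*d) *\<^sub>R S33 + (2*b*c) *\<^sub>R S12 + (2*b*d) *\<^sub>R S13 + (2*c*d) *\<^sub>R S23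
     + a *\<^sub>R Pm + b *\<^sub>R C8 + c *\<^sub>R C9 + d *\<^sub>R C10)"

lemma S_e[simp]: "S11 $ i $ j = (\<Sum>k\<in>UNIV. B8 $ i $ k * B8 $ k $ j)"
  "S22 $ i $ j = (\<Sum>k\<in>UNIV. B9 $ i $ k * B9 $ k $ j)"
  "S33 $ i $ j = (\<Sum>k\<in>UNIV. B10 $ i $ k * B10 $ k $ j)"
  "S12 $ i $ j = (\<Sum>k\<in>UNIV. B8 $ i $ k * B9 $ k $ j) + (\<Sum>k\<in>UNIV. B9 $ i $ k * B8 $ k $ j)"
  "S13 $ i $ j = (\<Sum>k\<in>UNIV. B8 $ i $ k * B10 $ k $ j) + (\<Sum>k\<in>UNIV. B10 $ i $ k * B8 $ k $ j)"
  "S23 $ i $ j = (\<Sum>k\<in>UNIV. B9 $ i $ k * B10 $ k $ j) + (\<Sum>k\<in>UNIV. B10 $ i $ k * B9 $ k $ j)"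
  by (simp_all add: S11_def S22_def S33_def S12_def S13_def S23_def matrix_matrix_mult_def)

lemma L1_mult: "L1 (a0,a1,a2,a3) ** L1 (b0,b1,b2,b3) = L1 (qm (a0,a1,a2,a3) (b0,b1,b2,b3))"
  unfolding L1_def qm_def
  by (simp add: vec_eq_iff forall7 matrix_matrix_mult_def sum7)

lemma Phi_mult: "Phi (a0,a1,a2,a3) ** Phi (b0,b1,b2,b3) = Phi (qm (a0,a1,a2,a3) (b0,b1,b2,b3))"
  unfolding Phi_def qm_def
  apply (simp add: vec_eq_iff forall7 matrix_matrix_mult_def sum7)
  apply (simp add: algebra_simps)?
  done


definition N1 :: "real \<Rightarrow> real \<Rightarrow> real \<Rightarrow> mat7" where "N1 a b c = a *\<^sub>R lam1 + b *\<^sub>R lam2 + c *\<^sub>R lam3"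
definition BB :: "real \<Rightarrow> real \<Rightarrow> real \<Rightarrow> mat7" where "BB a b c = a *\<^sub>R B8 + b *\<^sub>R B9 + c *\<^sub>R B10"
definition CC :: "real \<Rightarrow> real \<Rightarrow> real \<Rightarrow> mat7" where "CC a b c = a *\<^sub>R C8 + b *\<^sub>R C9 + c *\<^sub>R C10"

lemma matrix_neg_right7: "(A::mat7) ** (- C) = - (A ** C)"
  by (simp add: matrix_matrix_mult_def vec_eq_iff sum_negf)

lemma mat1_split: "mat 1 = Q0m + Pm"
  by (simp add: vec_eq_iff forall7 mat_def)

lemma N1sq: "N1 a b c ** N1 a b c = - (a*a+b*b+c*c) *\<^sub>R Pm"
  unfolding N1_def by (simp add: vec_eq_iff forall7 matrix_matrix_mult_def sum7 algebra_simps)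

lemma N1P: "N1 a b c ** Pm = N1 a b c"
  unfolding N1_def by (simp add: vec_eq_iff forall7 matrix_matrix_mult_def sum7)

lemma CCsq: "CC a b c ** CC a b c = - (a*a+b*b+c*c) *\<^sub>R Pm"
  unfolding CC_def by (simp add: vec_eq_iff forall7 matrix_matrix_mult_def sum7 algebra_simps)

lemma CCP: "CC a b c ** Pm = CC a b c"
  unfolding CC_def by (simp add: vec_eq_iff forall7 matrix_matrix_mult_def sum7)

lemma BBcube: "BB a b c ** (BB a b c ** BB a b c) = - (a*a+b*b+c*c) *\<^sub>R BB a b c"
  unfolding BB_def by (simp add: vec_eq_iff forall7 matrix_matrix_mult_def sum7 algebra_simps)

lemma BBCC: "BB a b c ** CC a b c = 0" "CC a b c ** BB a b c = 0"
  unfolding BB_def CC_def by (simp_all add: vec_eq_iff forall7 matrix_matrix_mult_def sum7)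

lemma lam8_split: "lam8 = 2 *\<^sub>R B8 + C8" unfolding lam8_def B8_def C8_def by (simp add: algebra_simps)
lemma lam9_split: "lam9 = 2 *\<^sub>R B9 + C9" unfolding lam9_def B9_def C9_def by (simp add: algebra_simps)
lemma lam10_split: "lam10 = 2 *\<^sub>R B10 + C10" unfolding lam10_def B10_def C10_def by (simp add: algebra_simps)

lemma lam_split: "a *\<^sub>R lam8 + b *\<^sub>R lam9 + c *\<^sub>R lam10 = 2 *\<^sub>R BB a b c + CC a b c"
  unfolding BB_def CC_def lam8_split lam9_split lam10_split by (simp add: algebra_simps)

lemma Phi_gen: "Phi (q, s * a, s * b, s * c) = (q*q + s * s*(a*a+b*b+c*c)) *\<^sub>R Q0m + (2*q * s) *\<^sub>R BB a b c
   + (2* s * s) *\<^sub>R (BB a b c ** BB a b c) + q *\<^sub>R Pm + s *\<^sub>R CC a b c"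
  unfolding Phi_def BB_def CC_def by (simp add: vec_eq_iff forall7 matrix_matrix_mult_def sum7 algebra_simps)

lemma L1_gen: "L1 (q, s * a, s * b, s * c) = Q0m + q *\<^sub>R Pm + s *\<^sub>R N1 a b c"
  unfolding L1_def N1_def by (simp add: algebra_simps)

lemma mexp_k1_unit:
  assumes "a*a+b*b+c*c = 1"
  shows "mexp (t *\<^sub>R N1 a b c) = L1 (cos t, sin t * a, sin t * b, sin t * c)"
proof -
  have sq: "N1 a b c ** N1 a b c = - Pm" using N1sq[of a b c] assms by simp
  have cube: "N1 a b c ** (N1 a b c ** N1 a b c) = - N1 a b c"
    unfolding sq by (simp add: matrix_neg_right7 N1P)
  show ?thesis unfolding mexp_cube[OF cube] L1_gen sq mat1_split
    by (simp add: algebra_simps)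
qed

lemma mexp_k2_unit:
  assumes "a*a+b*b+c*c = 1"
  shows "mexp (t *\<^sub>R (a *\<^sub>R lam8 + b *\<^sub>R lam9 + c *\<^sub>R lam10)) = Phi (cos t, sin t * a, sin t * b, sin t * c)"
proof -
  let ?B = "BB a b c" and ?C = "CC a b c"
  have csq: "?C ** ?C = - Pm" using CCsq[of a b c] assms by simp
  have ccube: "?C ** (?C ** ?C) = - ?C"
    unfolding csq by (simp add: matrix_neg_right7 CCP)
  have bcube: "?B ** (?B ** ?B) = - ?B" using BBcube[of a b c] assms by simp
  have split: "t *\<^sub>R (a *\<^sub>R lam8 + b *\<^sub>R lam9 + c *\<^sub>R lam10) = (2*t) *\<^sub>R ?B + t *\<^sub>R ?C"
    unfolding lam_split by (simp add: algebra_simps)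
  have xy: "((2*t) *\<^sub>R ?B) ** (t *\<^sub>R ?C) = 0" "(t *\<^sub>R ?C) ** ((2*t) *\<^sub>R ?B) = 0"
    by (simp_all add: matrix_scalar_ac scalar_matrix_assoc[symmetric] BBCC)
  have e: "mexp (t *\<^sub>R (a *\<^sub>R lam8 + b *\<^sub>R lam9 + c *\<^sub>R lam10)) =
     (mat 1 + sin (2*t) *\<^sub>R ?B + (1 - cos (2*t)) *\<^sub>R (?B ** ?B)) + (mat 1 + sin t *\<^sub>R ?C + (1 - cos t) *\<^sub>R (?C ** ?C)) - mat 1"
    unfolding split by (rule mexp_split_sums[OF xy mexp_sums[OF bcube] mexp_sums[OF ccube]])
  have s2: "sin (2*t) = 2 * cos t * sin t" by (simp add: sin_double)
  have c2: "1 - cos (2*t) = 2 * sin t * sin t" by (simp add: cos_double_sin power2_eq_square)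
  have pc: "cos t * cos t + sin t * sin t = 1" using sin_cos_squared_add[of t] by (simp add: power2_eq_square algebra_simps)
  show ?thesis unfolding e Phi_gen assms csq mat1_split s2 c2
    using pc by (simp add: algebra_simps)
qed


definition qn :: "real \<times> real \<times> real \<times> real \<Rightarrow> real" where "qn = (\<lambda>(a,b,c,d). a*a+b*b+c*c+d*d)"

definition E :: "real \<times> real \<times> real \<Rightarrow> real \<times> real \<times> real \<times> real" where
  "E x = (cos (fst (snd x)) * cos (fst x + snd (snd x)), cos (fst (snd x)) * sin (fst x + snd (snd x)),
          sin (fst (snd x)) * cos (fst x - snd (snd x)), sin (fst (snd x)) * sin (fst x - snd (snd x)))"

definition DE :: "real \<times> real \<times> real \<Rightarrow> real \<times> real \<times> real \<Rightarrow> real \<times> real \<times> real \<times> real" where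
  "DE x h = (- sin (fst (snd x)) * fst (snd h) * cos (fst x + snd (snd x)) - cos (fst (snd x)) * sin (fst x + snd (snd x)) * (fst h + snd (snd h)),
             - sin (fst (snd x)) * fst (snd h) * sin (fst x + snd (snd x)) + cos (fst (snd x)) * cos (fst x + snd (snd x)) * (fst h + snd (snd h)),
             cos (fst (snd x)) * fst (snd h) * cos (fst x - snd (snd x)) - sin (fst (snd x)) * sin (fst x - snd (snd x)) * (fst h - snd (snd h)),
             cos (fst (snd x)) * fst (snd h) * sin (fst x - snd (snd x)) + sin (fst (snd x)) * cos (fst x - snd (snd x)) * (fst h - snd (snd h)))"

definition box0 :: "(real \<times> real \<times> real) set" where "box0 = {0..pi} \<times> {0..pi/2} \<times> {0..2*pi}"
definition U0 :: "(real \<times> real \<times> real) set" where "U0 = {0<..<pi} \<times> {0<..<pi/2} \<times> {0<..<2*pi}"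

lemma E_deriv: "(E has_derivative DE x) (at x)"
  unfolding E_def
  apply (rule has_derivative_eq_rhs)
   apply (rule derivative_eq_intros refl | simp)+
  apply (simp add: DE_def fun_eq_iff algebra_simps)
  done


lemma qn_aux: "qn (c * u1, c * u2, d * v1, d * v2) = c^2 * (u1^2 + u2^2) + d^2 * (v1^2 + v2^2)"
  unfolding qn_def by (simp add: power2_eq_square algebra_simps)

lemma E_unit: "qn (E x) = 1"
  unfolding E_def qn_aux by simp

lemma polar: "\<exists>t. a = sqrt (a^2+b^2) * cos t \<and> b = sqrt (a^2+b^2) * sin t"
proof (cases "a^2 + b^2 = 0")
  case True
  then have "a = 0" "b = 0" by (auto simp: sum_power2_eq_zero_iff)
  then show ?thesis by auto
next
  case False
  define r where "r = sqrt (a^2+b^2)"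
  have "a^2 + b^2 > 0" using False by (metis add_nonneg_nonneg less_eq_real_def zero_le_power2)
  then have r: "r > 0" unfolding r_def by simp
  have rr: "r^2 = a^2 + b^2" unfolding r_def by simp
  have "(a/r)^2 + (b/r)^2 = (a^2+b^2)/r^2" by (simp add: power_divide add_divide_distrib)
  also have "\<dots> = 1" unfolding rr[symmetric] using r by simp
  finally have "(a/r)^2 + (b/r)^2 = 1" .
  then obtain t where "a/r = cos t" "b/r = sin t" by (rule sincos_total_2pi) auto
  then have "a = r * cos t" "b = r * sin t" using r by (auto simp: field_simps)
  then show ?thesis unfolding r_def by blast
qed

lemma periodic2pi: "y = x + 2 * pi * real_of_int k \<Longrightarrow> sin y = sin x \<and> cos y = cos x"
  using sin_cos_eq_iff by blast

lemma angle_adjust: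
  "\<exists>p w. 0 \<le> p \<and> p \<le> pi \<and> 0 \<le> w \<and> w \<le> 2*pi \<and>
     cos (p + w) = cos al \<and> sin (p + w) = sin al \<and> cos (p - w) = cos be \<and> sin (p - w) = sin be"
proof -
  define p0 where "p0 = (al + be) / 2"
  define w0 where "w0 = (al - be) / 2"
  define m where "m = floor (p0 / pi)"
  define p where "p = p0 - real_of_int m * pi"
  define w1 where "w1 = w0 - real_of_int m * pi"
  define n where "n = floor (w1 / (2*pi))"
  define w where "w = w1 - real_of_int n * (2*pi)"
  have m1: "real_of_int m \<le> p0 / pi" "p0 / pi < real_of_int m + 1" unfolding m_def by linarith+
  have n1: "real_of_int n \<le> w1 / (2*pi)" "w1 / (2*pi) < real_of_int n + 1" unfolding n_def by linarith+
  have pb: "0 \<le> p" "p \<le> pi"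
  proof -
    have "real_of_int m * pi \<le> p0" using m1(1) pi_gt_zero by (simp add: pos_le_divide_eq)
    then show "0 \<le> p" unfolding p_def by simp
    have "p0 < (real_of_int m + 1) * pi" using m1(2) pi_gt_zero by (simp add: pos_divide_less_eq)
    then show "p \<le> pi" unfolding p_def by (simp add: algebra_simps)
  qed
  have wb: "0 \<le> w" "w \<le> 2*pi"
  proof -
    have "real_of_int n * (2*pi) \<le> w1" using n1(1) pi_gt_zero by (simp add: pos_le_divide_eq)
    then show "0 \<le> w" unfolding w_def by simp
    have "w1 < (real_of_int n + 1) * (2*pi)" using n1(2) pi_gt_zero by (simp add: pos_divide_less_eq)
    then show "w \<le> 2*pi" unfolding w_def by (simp add: algebra_simps)
  qed
  have e1: "p + w = al + 2 * pi * real_of_int (- m - n)"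
    unfolding p_def w_def w1_def p0_def w0_def by (simp add: field_simps)
  have e2: "p - w = be + 2 * pi * real_of_int n"
    unfolding p_def w_def w1_def p0_def w0_def by (simp add: field_simps)
  show ?thesis using pb wb periodic2pi[OF e1] periodic2pi[OF e2] by blast
qed

lemma E_surj:
  assumes "qn q = 1"
  shows "\<exists>x\<in>box0. E x = q"
proof -
  obtain a b c d where q: "q = (a,b,c,d)" by (cases q) auto
  define r1 where "r1 = sqrt (a^2+b^2)"
  define r2 where "r2 = sqrt (c^2+d^2)"
  have "r1^2 + r2^2 = 1" using assms unfolding q qn_def r1_def r2_def by (simp add: power2_eq_square algebra_simps)
  moreover have "0 \<le> r1" "0 \<le> r2" unfolding r1_def r2_def by simp_all
  ultimately obtain s where s: "0 \<le> s" "s \<le> pi/2" "r1 = cos s" "r2 = sin s"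
    using sincos_total_pi_half by blast
  obtain al where al: "a = r1 * cos al" "b = r1 * sin al" using polar unfolding r1_def by blast
  obtain be where be: "c = r2 * cos be" "d = r2 * sin be" using polar unfolding r2_def by blast
  obtain p w where pw: "0 \<le> p" "p \<le> pi" "0 \<le> w" "w \<le> 2*pi"
     "cos (p + w) = cos al" "sin (p + w) = sin al" "cos (p - w) = cos be" "sin (p - w) = sin be"
    using angle_adjust by blast
  have "(p, s, w) \<in> box0" unfolding box0_def using pw s by auto
  moreover have "E (p, s, w) = q" unfolding E_def q using al be s pw by simp
  ultimately show ?thesis by blast
qed

lemma int_small: "\<bar>real_of_int k * c\<bar> < c \<Longrightarrow> k = 0"
proof -
  assume h: "\<bar>real_of_int k * c\<bar> < c"
  then have c: "c > 0" by (metis abs_ge_zero le_less_trans)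
  have "\<bar>real_of_int k\<bar> * c < 1 * c" using h c by (simp add: abs_mult)
  then have "\<bar>real_of_int k\<bar> < 1" using c by (meson less_eq_real_def mult_right_less_imp_less)
  then show "k = 0" by linarith
qed

lemma E_inj:
  assumes x: "x \<in> box0" and u: "u \<in> U0" and eq: "E x = E u"
  shows "x = u"
proof -
  obtain p s w where xd: "x = (p,s,w)" by (cases x) auto
  obtain p' s' w' where ud: "u = (p',s',w')" by (cases u) auto
  have xb: "0 \<le> p" "p \<le> pi" "0 \<le> s" "s \<le> pi/2" "0 \<le> w" "w \<le> 2*pi" using x unfolding xd box0_def by auto
  have ub: "0 < p'" "p' < pi" "0 < s'" "s' < pi/2" "0 < w'" "w' < 2*pi" using u unfolding ud U0_def by auto
  have e: "cos s * cos (p + w) = cos s' * cos (p' + w')" "cos s * sin (p + w) = cos s' * sin (p' + w')"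
          "sin s * cos (p - w) = sin s' * cos (p' - w')" "sin s * sin (p - w) = sin s' * sin (p' - w')"
    using eq unfolding xd ud E_def by simp_all
  have "(cos s)^2 = (cos s * cos (p + w))^2 + (cos s * sin (p + w))^2"
    by (simp add: power_mult_distrib distrib_left[symmetric])
  also have "\<dots> = (cos s')^2" unfolding e by (simp add: power_mult_distrib distrib_left[symmetric])
  finally have "(cos s)^2 = (cos s')^2" .
  moreover have "cos s \<ge> 0" "cos s' \<ge> 0" using xb ub by (auto intro!: cos_ge_zero)
  ultimately have cc: "cos s = cos s'" by (simp add: power2_eq_iff_nonneg)
  have ss: "s = s'" apply (rule cos_inj_pi) using xb ub cc pi_gt_zero by linarith+
  have cpos: "cos s' > 0" using ub by (intro cos_gt_zero) auto
  have spos: "sin s' > 0" using ub by (intro sin_gt_zero) auto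
  have a1: "sin (p + w) = sin (p' + w') \<and> cos (p + w) = cos (p' + w')"
    using e(1,2) cpos unfolding ss by simp
  have a2: "sin (p - w) = sin (p' - w') \<and> cos (p - w) = cos (p' - w')"
    using e(3,4) spos unfolding ss by simp
  obtain k1 where k1: "p + w = p' + w' + 2 * pi * real_of_int k1" using a1 sin_cos_eq_iff by blast
  obtain k2 where k2: "p - w = p' - w' + 2 * pi * real_of_int k2" using a2 sin_cos_eq_iff by blast
  have "p - p' = real_of_int (k1 + k2) * pi" using k1 k2 by (simp add: algebra_simps)
  moreover have "\<bar>p - p'\<bar> < pi" using xb ub by auto
  ultimately have "k1 + k2 = 0" using int_small by metis
  then have "real_of_int k1 + real_of_int k2 = 0" by (metis of_int_add of_int_0)
  then have "2 * pi * real_of_int k1 + 2 * pi * real_of_int k2 = 0" by (metis distrib_left mult_zero_right)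
  then have pp: "p = p'" using k1 k2 by linarith
  have "w - w' = real_of_int k1 * (2*pi)" using k1 pp by (simp add: algebra_simps)
  moreover have "\<bar>w - w'\<bar> < 2*pi" using xb ub by auto
  ultimately have "k1 = 0" using int_small by metis
  then have "w = w'" using k1 pp by simp
  then show ?thesis unfolding xd ud using pp ss by simp
qed

lemma DE_inj:
  assumes u: "u \<in> U0" and h: "DE u h = 0"
  shows "h = 0"
proof -
  obtain p s w where ud: "u = (p,s,w)" by (cases u) auto
  obtain h1 h2 h3 where hd: "h = (h1,h2,h3)" by (cases h) auto
  have ub: "0 < s" "s < pi/2" using u unfolding ud U0_def by auto
  have cpos: "cos s > 0" using ub by (intro cos_gt_zero) auto
  have spos: "sin s > 0" using ub by (intro sin_gt_zero) auto
  define A where "A = p + w"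
  define B where "B = p - w"
  define X where "X = h1 + h3"
  define Y where "Y = h1 - h3"
  have e: "- sin s * h2 * cos A - cos s * sin A * X = 0" "- sin s * h2 * sin A + cos s * cos A * X = 0"
          "cos s * h2 * cos B - sin s * sin B * Y = 0" "cos s * h2 * sin B + sin s * cos B * Y = 0"
    using h unfolding ud hd DE_def A_def B_def X_def Y_def by (simp_all add: zero_prod_def)
  have sa: "(sin A)^2 + (cos A)^2 = 1" "(sin B)^2 + (cos B)^2 = 1" by simp_all
  have "cos s * X = cos s * X * ((sin A)^2 + (cos A)^2)" by (simp only: sa mult_1_right)
  also have "\<dots> = - sin A * (- sin s * h2 * cos A - cos s * sin A * X) + cos A * (- sin s * h2 * sin A + cos s * cos A * X)"
    by (simp only: power2_eq_square; algebra)
  also have "\<dots> = 0" using e by simp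
  finally have X0: "X = 0" using cpos by simp
  have "sin s * h2 = sin s * h2 * ((sin A)^2 + (cos A)^2)" by (simp only: sa mult_1_right)
  also have "\<dots> = - cos A * (- sin s * h2 * cos A - cos s * sin A * X) - sin A * (- sin s * h2 * sin A + cos s * cos A * X)"
    by (simp only: power2_eq_square; algebra)
  also have "\<dots> = 0" using e by simp
  finally have h20: "h2 = 0" using spos by simp
  have "sin s * Y = sin s * Y * ((sin B)^2 + (cos B)^2)" by (simp only: sa mult_1_right)
  also have "\<dots> = - sin B * (cos s * h2 * cos B - sin s * sin B * Y) + cos B * (cos s * h2 * sin B + sin s * cos B * Y)"
    by (simp only: power2_eq_square; algebra)
  also have "\<dots> = 0" using e by simp
  finally have Y0: "Y = 0" using spos by simp
  show ?thesis using X0 Y0 h20 unfolding hd X_def Y_def by (simp add: zero_prod_def)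
qed


definition qconj :: "real \<times> real \<times> real \<times> real \<Rightarrow> real \<times> real \<times> real \<times> real" where
  "qconj = (\<lambda>(a,b,c,d). (a, -b, -c, -d))"

definition S3 :: "(real \<times> real \<times> real \<times> real) set" where "S3 = {q. qn q = 1}"

lemma L1_mult_gen: "L1 p ** L1 q = L1 (qm p q)"
  by (cases p; cases q) (auto simp: L1_mult)

lemma Phi_mult_gen: "Phi p ** Phi q = Phi (qm p q)"
  by (cases p; cases q) (auto simp: Phi_mult)

lemma qn_mult: "qn (qm p q) = qn p * qn q"
  by (cases p; cases q) (auto simp: qn_def qm_def algebra_simps)

lemma qm_conj: "qm p (qconj p) = (qn p, 0, 0, 0)" "qm (qconj p) p = (qn p, 0, 0, 0)"
  by (cases p; auto simp: qn_def qm_def qconj_def algebra_simps)+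

lemma qn_conj: "qn (qconj p) = qn p"
  by (cases p) (auto simp: qn_def qconj_def)

lemma L1_one: "L1 (1,0,0,0) = mat 1"
  unfolding L1_def mat1_split by simp

lemma Phi_one: "Phi (1,0,0,0) = mat 1"
  unfolding Phi_def mat1_split by simp

lemma matrix_inv_eq:
  assumes "(A::mat7) ** B = mat 1" "B ** A = mat 1"
  shows "matrix_inv A = B"
proof -
  have ex: "\<exists>A'. A ** A' = mat 1 \<and> A' ** A = mat 1" using assms by blast
  define A' where "A' = matrix_inv A"
  have h: "A ** A' = mat 1 \<and> A' ** A = mat 1"
    unfolding A'_def matrix_inv_def by (rule someI_ex[OF ex])
  have "A' = A' ** (A ** B)" using assms by simp
  also have "\<dots> = (A' ** A) ** B" by (simp add: matrix_mul_assoc)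
  also have "\<dots> = B" using h by simp
  finally show ?thesis unfolding A'_def .
qed

lemma gen_group_sub:
  assumes F1: "F (1,0,0,0) = mat 1"
    and FM: "\<And>p q. F p ** F q = F (qm p q)"
    and S: "S \<subseteq> F ` S3"
  shows "gen_group S \<subseteq> F ` S3"
proof
  fix g assume "g \<in> gen_group S"
  then show "g \<in> F ` S3"
  proof (induction rule: gen_group.induct)
    case gen_one
    have "(1::real,0::real,0::real,0::real) \<in> S3" unfolding S3_def qn_def by simp
    then show ?case using F1 by (metis image_eqI)
  next
    case (gen_mul s g)
    obtain p where p: "p \<in> S3" "s = F p" using gen_mul S by blast
    obtain q where q: "q \<in> S3" "g = F q" using gen_mul by blast
    have "qm p q \<in> S3" using p q unfolding S3_def by (simp add: qn_mult)
    then show ?case unfolding p q FM by blast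
  next
    case (gen_inv s g)
    obtain p where p: "p \<in> S3" "s = F p" using gen_inv S by blast
    obtain q where q: "q \<in> S3" "g = F q" using gen_inv by blast
    have pn: "qn p = 1" using p unfolding S3_def by simp
    have "matrix_inv s = F (qconj p)"
      unfolding p by (rule matrix_inv_eq) (simp_all add: FM qm_conj pn F1)
    moreover have "qm (qconj p) q \<in> S3" using p q unfolding S3_def by (simp add: qn_mult qn_conj)
    ultimately show ?case unfolding q by (metis FM image_eqI)
  qed
qed

lemma span3: "span {x, y, z} \<subseteq> {a *\<^sub>R x + b *\<^sub>R y + c *\<^sub>R z | a b c. True}"
proof (rule span_minimal)
  show "{x, y, z} \<subseteq> {a *\<^sub>R x + b *\<^sub>R y + c *\<^sub>R z | a b c. True}"
  proof -
    have "x = 1 *\<^sub>R x + 0 *\<^sub>R y + 0 *\<^sub>R z" "y = 0 *\<^sub>R x + 1 *\<^sub>R y + 0 *\<^sub>R z" "z = 0 *\<^sub>R x + 0 *\<^sub>R y + 1 *\<^sub>R z" by simp_all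
    then show ?thesis by blast
  qed
  show "subspace {a *\<^sub>R x + b *\<^sub>R y + c *\<^sub>R z | a b c. True}"
    unfolding subspace_def
  proof (intro conjI ballI allI)
    show "0 \<in> {a *\<^sub>R x + b *\<^sub>R y + c *\<^sub>R z | a b c. True}"
      by (rule CollectI, rule exI[of _ 0], rule exI[of _ 0], rule exI[of _ 0]) simp
  next
    fix u v assume "u \<in> {a *\<^sub>R x + b *\<^sub>R y + c *\<^sub>R z | a b c. True}" "v \<in> {a *\<^sub>R x + b *\<^sub>R y + c *\<^sub>R z | a b c. True}"
    then obtain a b c a' b' c' where "u = a *\<^sub>R x + b *\<^sub>R y + c *\<^sub>R z" "v = a' *\<^sub>R x + b' *\<^sub>R y + c' *\<^sub>R z" by blast
    then have "u + v = (a+a') *\<^sub>R x + (b+b') *\<^sub>R y + (c+c') *\<^sub>R z" by (simp add: algebra_simps)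
    then show "u + v \<in> {a *\<^sub>R x + b *\<^sub>R y + c *\<^sub>R z | a b c. True}" by blast
  next
    fix k u assume "u \<in> {a *\<^sub>R x + b *\<^sub>R y + c *\<^sub>R z | a b c. True}"
    then obtain a b c where "u = a *\<^sub>R x + b *\<^sub>R y + c *\<^sub>R z" by blast
    then have "k *\<^sub>R u = (k*a) *\<^sub>R x + (k*b) *\<^sub>R y + (k*c) *\<^sub>R z" by (simp add: algebra_simps)
    then show "k *\<^sub>R u \<in> {a *\<^sub>R x + b *\<^sub>R y + c *\<^sub>R z | a b c. True}" by blast
  qed
qed

lemma normalize3:
  fixes a b c :: real
  assumes "\<not> (a = 0 \<and> b = 0 \<and> c = 0)"
  defines "r \<equiv> sqrt (a*a+b*b+c*c)"
  shows "r > 0" "(a/r)*(a/r) + (b/r)*(b/r) + (c/r)*(c/r) = 1" "a = r * (a/r)" "b = r * (b/r)" "c = r * (c/r)"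
proof -
  have sq: "0 \<le> a*a" "0 \<le> b*b" "0 \<le> c*c" by simp_all
  have "a*a+b*b+c*c \<noteq> 0"
  proof
    assume "a*a+b*b+c*c = 0"
    then have "a*a = 0" "b*b = 0" "c*c = 0" using sq by linarith+
    then show False using assms(1) by simp
  qed
  then have pos: "a*a+b*b+c*c > 0" using sq by linarith
  then show r: "r > 0" unfolding r_def by simp
  have rr: "r * r = a*a+b*b+c*c" unfolding r_def using pos by simp
  have "(a/r)*(a/r) + (b/r)*(b/r) + (c/r)*(c/r) = (a*a+b*b+c*c)/(r*r)" by (simp add: add_divide_distrib)
  then show "(a/r)*(a/r) + (b/r)*(b/r) + (c/r)*(c/r) = 1" using rr pos by simp
  show "a = r * (a/r)" "b = r * (b/r)" "c = r * (c/r)" using r by simp_all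
qed

lemma mexp_k1_in: "M \<in> k1 \<Longrightarrow> mexp M \<in> L1 ` S3"
proof -
  assume "M \<in> k1"
  then obtain a b c where M: "M = N1 a b c" using span3 unfolding k1_def N1_def by blast
  show ?thesis
  proof (cases "a = 0 \<and> b = 0 \<and> c = 0")
    case True
    then have "M = 0 *\<^sub>R N1 0 0 1" unfolding M N1_def by simp
    then have "mexp M = L1 (cos 0, sin 0 * 0, sin 0 * 0, sin 0 * 1)" using mexp_k1_unit[of 0 0 1 0] by simp
    moreover have "(cos 0, sin 0 * 0, sin 0 * 0, sin 0 * 1) \<in> S3" unfolding S3_def qn_def by simp
    ultimately show ?thesis by blast
  next
    case False
    define r where "r = sqrt (a*a+b*b+c*c)"
    note n = normalize3[OF False, folded r_def]
    have "M = r *\<^sub>R N1 (a/r) (b/r) (c/r)" unfolding M N1_def using n(1) by (simp add: algebra_simps)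
    then have "mexp M = L1 (cos r, sin r * (a/r), sin r * (b/r), sin r * (c/r))" using mexp_k1_unit[OF n(2)] by simp
    moreover have "(cos r, sin r * (a/r), sin r * (b/r), sin r * (c/r)) \<in> S3"
    proof -
      have "qn (cos r, sin r * (a/r), sin r * (b/r), sin r * (c/r)) = (cos r)^2 + (sin r)^2 * ((a/r)*(a/r) + (b/r)*(b/r) + (c/r)*(c/r))"
        unfolding qn_def by (simp add: power2_eq_square algebra_simps)
      also have "\<dots> = 1" unfolding n(2) by simp
      finally show ?thesis unfolding S3_def by simp
    qed
    ultimately show ?thesis by blast
  qed
qed

lemma mexp_k2_in: "M \<in> k2 \<Longrightarrow> mexp M \<in> Phi ` S3"
proof -
  assume "M \<in> k2"
  then obtain a b c where M: "M = a *\<^sub>R lam8 + b *\<^sub>R lam9 + c *\<^sub>R lam10" using span3 unfolding k2_def by blast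
  show ?thesis
  proof (cases "a = 0 \<and> b = 0 \<and> c = 0")
    case True
    then have "M = 0 *\<^sub>R (1 *\<^sub>R lam8 + 0 *\<^sub>R lam9 + 0 *\<^sub>R lam10)" unfolding M by simp
    then have "mexp M = Phi (cos 0, sin 0 * 1, sin 0 * 0, sin 0 * 0)" using mexp_k2_unit[of 1 0 0 0] by simp
    moreover have "(cos 0, sin 0 * 1, sin 0 * 0, sin 0 * 0) \<in> S3" unfolding S3_def qn_def by simp
    ultimately show ?thesis by blast
  next
    case False
    define r where "r = sqrt (a*a+b*b+c*c)"
    note n = normalize3[OF False, folded r_def]
    have "M = r *\<^sub>R ((a/r) *\<^sub>R lam8 + (b/r) *\<^sub>R lam9 + (c/r) *\<^sub>R lam10)" unfolding M using n(1) by (simp add: algebra_simps)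
    then have "mexp M = Phi (cos r, sin r * (a/r), sin r * (b/r), sin r * (c/r))" using mexp_k2_unit[OF n(2)] by simp
    moreover have "(cos r, sin r * (a/r), sin r * (b/r), sin r * (c/r)) \<in> S3"
    proof -
      have "qn (cos r, sin r * (a/r), sin r * (b/r), sin r * (c/r)) = (cos r)^2 + (sin r)^2 * ((a/r)*(a/r) + (b/r)*(b/r) + (c/r)*(c/r))"
        unfolding qn_def by (simp add: power2_eq_square algebra_simps)
      also have "\<dots> = 1" unfolding n(2) by simp
      finally show ?thesis unfolding S3_def by simp
    qed
    ultimately show ?thesis by blast
  qed
qed


definition sig :: "real \<times> real \<times> real \<times> real \<Rightarrow> real \<times> real \<times> real \<times> real" where
  "sig = (\<lambda>(a,b,c,d). (a, -d, c, b))"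

definition spl :: "real \<times> real \<times> real \<times> real \<times> real \<times> real \<Rightarrow> real \<times> real \<times> real" where
  "spl x = (fst x, fst (snd x), fst (snd (snd x)))"
definition spr :: "real \<times> real \<times> real \<times> real \<times> real \<times> real \<Rightarrow> real \<times> real \<times> real" where
  "spr x = snd (snd (snd x))"

lemma exp_lam3: "mexp (t *\<^sub>R lam3) = L1 (cos t, 0, 0, sin t)"
  using mexp_k1_unit[of 0 0 1 t] by (simp add: N1_def)
lemma exp_lam2: "mexp (t *\<^sub>R lam2) = L1 (cos t, 0, sin t, 0)"
  using mexp_k1_unit[of 0 1 0 t] by (simp add: N1_def)
lemma exp_lam8: "mexp (t *\<^sub>R lam8) = Phi (cos t, sin t, 0, 0)"
  using mexp_k2_unit[of 1 0 0 t] by simp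
lemma exp_lam9: "mexp (t *\<^sub>R lam9) = Phi (cos t, 0, sin t, 0)"
  using mexp_k2_unit[of 0 1 0 t] by simp

lemma Qa: "qm (qm (cos p,0,0,sin p) (cos s,0,sin s,0)) (cos w,0,0,sin w) = sig (E (p,s,w))"
  unfolding qm_def E_def sig_def by (simp add: cos_add sin_add cos_diff sin_diff algebra_simps)

lemma Qb: "qm (qm (cos p, sin p,0,0) (cos s,0,sin s,0)) (cos w, sin w,0,0) = E (p,s,w)"
  unfolding qm_def E_def by (simp add: cos_add sin_add cos_diff sin_diff algebra_simps)

lemma euler_eq: "euler_map x = (L1 (sig (E (spl x))), Phi (E (spr x)))"
proof -
  obtain p1 s1 w1 p2 s2 w2 where x: "x = (p1,s1,w1,p2,s2,w2)" by (cases x) auto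
  show ?thesis unfolding x euler_map_def spl_def spr_def
    by (simp add: exp_lam3 exp_lam2 exp_lam8 exp_lam9 L1_mult_gen Phi_mult_gen Qa Qb)
qed

lemma sig_S3: "q \<in> S3 \<Longrightarrow> sig q \<in> S3"
  by (cases q) (auto simp: S3_def qn_def sig_def)

lemma sig_surj: "q \<in> S3 \<Longrightarrow> \<exists>q'\<in>S3. sig q' = q"
proof -
  assume q: "q \<in> S3"
  obtain a b c d where qd: "q = (a,b,c,d)" by (cases q) auto
  have "(a, d, c, -b) \<in> S3" "sig (a, d, c, -b) = q" using q unfolding qd S3_def qn_def sig_def by auto
  then show ?thesis by blast
qed

lemma E_S3: "E x \<in> S3" unfolding S3_def using E_unit by simp

lemma gen_group_mem3: "s1 \<in> S \<Longrightarrow> s2 \<in> S \<Longrightarrow> s3 \<in> S \<Longrightarrow> s1 ** s2 ** s3 \<in> gen_group S"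
proof -
  assume h: "s1 \<in> S" "s2 \<in> S" "s3 \<in> S"
  have "s1 ** (s2 ** (s3 ** mat 1)) \<in> gen_group S"
    using h by (intro gen_group.gen_mul gen_group.gen_one)
  then show ?thesis by (simp add: matrix_mul_assoc)
qed

lemma G1_eq: "gen_group (mexp ` k1) = L1 ` S3"
proof
  show "gen_group (mexp ` k1) \<subseteq> L1 ` S3"
    by (rule gen_group_sub[OF L1_one L1_mult_gen]) (auto intro: mexp_k1_in)
  show "L1 ` S3 \<subseteq> gen_group (mexp ` k1)"
  proof
    fix g assume "g \<in> L1 ` S3"
    then obtain q where q: "q \<in> S3" "g = L1 q" by blast
    obtain q' where q': "q' \<in> S3" "sig q' = q" using sig_surj[OF q(1)] by blast
    obtain x where x: "x \<in> box0" "E x = q'" using E_surj[of q'] q'(1) unfolding S3_def by auto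
    obtain p s w where xd: "x = (p,s,w)" by (cases x) auto
    have "g = mexp (p *\<^sub>R lam3) ** mexp (s *\<^sub>R lam2) ** mexp (w *\<^sub>R lam3)"
      unfolding q(2) q'(2)[symmetric] x(2)[symmetric] xd
      by (simp add: exp_lam3 exp_lam2 L1_mult_gen Qa)
    moreover have "t *\<^sub>R lam3 \<in> k1" "t *\<^sub>R lam2 \<in> k1" for t
      unfolding k1_def by (simp_all add: span_mul span_base)
    ultimately show "g \<in> gen_group (mexp ` k1)" by (simp add: gen_group_mem3)
  qed
qed

lemma G2_eq: "gen_group (mexp ` k2) = Phi ` S3"
proof
  show "gen_group (mexp ` k2) \<subseteq> Phi ` S3"
    by (rule gen_group_sub[OF Phi_one Phi_mult_gen]) (auto intro: mexp_k2_in)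
  show "Phi ` S3 \<subseteq> gen_group (mexp ` k2)"
  proof
    fix g assume "g \<in> Phi ` S3"
    then obtain q where q: "q \<in> S3" "g = Phi q" by blast
    obtain x where x: "x \<in> box0" "E x = q" using E_surj[of q] q(1) unfolding S3_def by auto
    obtain p s w where xd: "x = (p,s,w)" by (cases x) auto
    have "g = mexp (p *\<^sub>R lam8) ** mexp (s *\<^sub>R lam9) ** mexp (w *\<^sub>R lam8)"
      unfolding q(2) x(2)[symmetric] xd
      by (simp add: exp_lam8 exp_lam9 Phi_mult_gen Qb)
    moreover have "t *\<^sub>R lam8 \<in> k2" "t *\<^sub>R lam9 \<in> k2" for t
      unfolding k2_def by (simp_all add: span_mul span_base)
    ultimately show "g \<in> gen_group (mexp ` k2)" by (simp add: gen_group_mem3)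
  qed
qed

lemma param_box_iff: "x \<in> param_box \<longleftrightarrow> spl x \<in> box0 \<and> spr x \<in> box0"
  by (cases x) (auto simp: param_box_def box0_def spl_def spr_def)

lemma Khat_eq: "euler_map ` param_box = Khat"
proof
  show "euler_map ` param_box \<subseteq> Khat"
  proof
    fix y assume "y \<in> euler_map ` param_box"
    then obtain x where x: "x \<in> param_box" "y = euler_map x" by blast
    show "y \<in> Khat" unfolding Khat_def G1_eq G2_eq x(2) euler_eq
      using sig_S3[OF E_S3] E_S3 by blast
  qed
  show "Khat \<subseteq> euler_map ` param_box"
  proof
    fix y assume "y \<in> Khat"
    then obtain q1 q2 where q: "q1 \<in> S3" "q2 \<in> S3" "y = (L1 q1, Phi q2)"
      unfolding Khat_def G1_eq G2_eq by blast
    obtain q' where q': "q' \<in> S3" "sig q' = q1" using sig_surj[OF q(1)] by blast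
    obtain x1 where x1: "x1 \<in> box0" "E x1 = q'" using E_surj[of q'] q'(1) unfolding S3_def by auto
    obtain x2 where x2: "x2 \<in> box0" "E x2 = q2" using E_surj[of q2] q(2) unfolding S3_def by auto
    define x where "x = (fst x1, fst (snd x1), snd (snd x1), x2)"
    have sx: "spl x = x1" "spr x = x2" unfolding x_def spl_def spr_def by simp_all
    have "x \<in> param_box" using x1 x2 sx param_box_iff by simp
    moreover have "euler_map x = y" unfolding euler_eq sx q(3) x1(2) x2(2) q'(2) ..
    ultimately show "y \<in> euler_map ` param_box" by blast
  qed
qed


definition Psi :: "(real \<times> real \<times> real \<times> real) \<times> (real \<times> real \<times> real \<times> real) \<Rightarrow> mat7 \<times> mat7" where
  "Psi z = (L1 (fst z), Phi (snd z))"

lemma L1_alt: "L1 q = Q0m + fst q *\<^sub>R Pm + fst (snd q) *\<^sub>R lam1 + fst (snd (snd q)) *\<^sub>R lam2 + snd (snd (snd q)) *\<^sub>R lam3"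
  by (cases q) (simp add: L1_def)

lemma Phi_alt: "Phi q = (let a = fst q; b = fst (snd q); c = fst (snd (snd q)); d = snd (snd (snd q)) in
     (a*a+b*b+c*c+d*d) *\<^sub>R Q0m + (2*a*b) *\<^sub>R B8 + (2*a*c) *\<^sub>R B9 + (2*a*d) *\<^sub>R B10
     + (2*b*b) *\<^sub>R S11 + (2*c*c) *\<^sub>R S22 + (2*d*d) *\<^sub>R S33 + (2*b*c) *\<^sub>R S12 + (2*b*d) *\<^sub>R S13 + (2*c*d) *\<^sub>R S23
     + a *\<^sub>R Pm + b *\<^sub>R C8 + c *\<^sub>R C9 + d *\<^sub>R C10)"
  by (cases q) (simp add: Phi_def Let_def)

lemma Psi_deriv: "\<exists>D. (Psi has_derivative D) (at z)"
  unfolding Psi_def L1_alt Phi_alt Let_def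
  by (rule exI, (rule derivative_intros)+)


definition G :: "real \<times> real \<times> real \<times> real \<times> real \<times> real \<Rightarrow> (real \<times> real \<times> real \<times> real) \<times> (real \<times> real \<times> real \<times> real)" where
  "G x = (sig (E (spl x)), E (spr x))"

lemma euler_Psi: "euler_map = (\<lambda>x. Psi (G x))"
  by (rule ext) (simp add: euler_eq Psi_def G_def)

definition readL :: "mat7 \<Rightarrow> real \<times> real \<times> real \<times> real" where
  "readL M = (M$4$4, M$0$4, - M$6$4, M$5$4)"
definition readP :: "mat7 \<Rightarrow> real \<times> real \<times> real \<times> real" where
  "readP M = (M$4$4, - M$5$4, - M$0$4, M$6$4)"
definition R :: "mat7 \<times> mat7 \<Rightarrow> (real \<times> real \<times> real \<times> real) \<times> (real \<times> real \<times> real \<times> real)" where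
  "R z = (readL (fst z), readP (snd z))"

lemma readL_L1: "readL (L1 q) = q"
  by (cases q) (simp add: readL_def L1_def)

lemma readP_Phi: "readP (Phi q) = q"
  by (cases q) (simp add: readP_def Phi_def sum7)

lemma R_Psi: "R (Psi z) = z"
  by (simp add: R_def Psi_def readL_L1 readP_Phi)

lemma R_linear: "bounded_linear R"
proof -
  have "linear R"
    by (rule linearI) (simp_all add: R_def readL_def readP_def algebra_simps)
  then show ?thesis by (simp add: linear_conv_bounded_linear)
qed

lemma sig_inj: "sig a = sig b \<Longrightarrow> a = b"
  by (cases a; cases b) (simp add: sig_def)

definition Uset :: "(real \<times> real \<times> real \<times> real \<times> real \<times> real) set" where
  "Uset = {0<..<pi} \<times> {0<..<pi/2} \<times> {0<..<2*pi} \<times> {0<..<pi} \<times> {0<..<pi/2} \<times> {0<..<2*pi}"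

lemma Uset_iff: "x \<in> Uset \<longleftrightarrow> spl x \<in> U0 \<and> spr x \<in> U0"
  by (cases x) (auto simp: Uset_def U0_def spl_def spr_def)

lemma spl_spr_eq: "spl x = spl y \<Longrightarrow> spr x = spr y \<Longrightarrow> x = y"
  by (cases x; cases y) (simp add: spl_def spr_def)

lemma sat:
  assumes p: "p \<in> param_box" and u: "u \<in> Uset" and eq: "euler_map p = euler_map u"
  shows "p = u"
proof -
  have e1: "L1 (sig (E (spl p))) = L1 (sig (E (spl u)))" and e2: "Phi (E (spr p)) = Phi (E (spr u))"
    using eq unfolding euler_eq by simp_all
  have "sig (E (spl p)) = sig (E (spl u))" using arg_cong[OF e1, of readL] by (simp add: readL_L1)
  then have "E (spl p) = E (spl u)" by (rule sig_inj)
  then have a: "spl p = spl u" using p u param_box_iff Uset_iff E_inj by blast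
  have "E (spr p) = E (spr u)" using arg_cong[OF e2, of readP] by (simp add: readP_Phi)
  then have b: "spr p = spr u" using p u param_box_iff Uset_iff E_inj by blast
  show ?thesis using a b by (rule spl_spr_eq)
qed

lemma Uset_sub: "Uset \<subseteq> param_box"
  unfolding Uset_def param_box_def by auto

lemma open_Uset: "open Uset"
  unfolding Uset_def by (intro open_Times open_greaterThanLessThan)

lemma box_Pair_eq: "box (a, c) (b, d) = box a b \<times> box c d"
  by (force simp: box_def Basis_prod_def)

lemma null_diff: "param_box - Uset \<in> null_sets lborel"
proof -
  define a :: "real \<times> real \<times> real \<times> real \<times> real \<times> real" where "a = (0,0,0,0,0,0)"
  define b :: "real \<times> real \<times> real \<times> real \<times> real \<times> real" where "b = (pi,pi/2,2*pi,pi,pi/2,2*pi)"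
  have pb: "param_box = cbox a b" unfolding param_box_def a_def b_def by (simp add: cbox_Pair_eq)
  have ub: "Uset = box a b" unfolding Uset_def a_def b_def by (simp add: box_Pair_eq)
  show ?thesis unfolding pb ub by (rule null_sets_cbox_Diff_box)
qed

lemma spl_deriv: "(spl has_derivative spl) F"
proof -
  have "linear spl" by (rule linearI) (simp_all add: spl_def)
  then show ?thesis by (simp add: linear_conv_bounded_linear bounded_linear_imp_has_derivative)
qed

lemma spr_deriv: "(spr has_derivative spr) F"
proof -
  have "linear spr" by (rule linearI) (simp_all add: spr_def)
  then show ?thesis by (simp add: linear_conv_bounded_linear bounded_linear_imp_has_derivative)
qed

lemma sig_linear: "bounded_linear sig"
proof -
  have "linear sig"
    by (rule linearI) (auto simp: sig_def split: prod.splits)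
  then show ?thesis by (simp add: linear_conv_bounded_linear)
qed

definition DG :: "real \<times> real \<times> real \<times> real \<times> real \<times> real \<Rightarrow> real \<times> real \<times> real \<times> real \<times> real \<times> real \<Rightarrow> (real \<times> real \<times> real \<times> real) \<times> (real \<times> real \<times> real \<times> real)" where
  "DG x h = (sig (DE (spl x) (spl h)), DE (spr x) (spr h))"

lemma G_deriv: "(G has_derivative DG x) (at x)"
proof -
  have a: "((\<lambda>x. E (spl x)) has_derivative (\<lambda>h. DE (spl x) (spl h))) (at x)"
    by (rule has_derivative_compose[OF spl_deriv E_deriv])
  have a': "((\<lambda>x. sig (E (spl x))) has_derivative (\<lambda>h. sig (DE (spl x) (spl h)))) (at x)"
    by (rule bounded_linear.has_derivative[OF sig_linear a])
  have b: "((\<lambda>x. E (spr x)) has_derivative (\<lambda>h. DE (spr x) (spr h))) (at x)"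
    by (rule has_derivative_compose[OF spr_deriv E_deriv])
  show ?thesis unfolding G_def[abs_def] DG_def[abs_def]
    by (rule has_derivative_Pair[OF a' b])
qed

lemma sig_zero: "sig a = 0 \<Longrightarrow> a = 0"
  by (cases a) (simp add: sig_def zero_prod_def)

lemma DG_inj: "x \<in> Uset \<Longrightarrow> DG x h = 0 \<Longrightarrow> h = 0"
proof -
  assume x: "x \<in> Uset" and h: "DG x h = 0"
  have "sig (DE (spl x) (spl h)) = 0" "DE (spr x) (spr h) = 0" using h unfolding DG_def by (simp_all add: zero_prod_def)
  then have "DE (spl x) (spl h) = 0" "DE (spr x) (spr h) = 0" using sig_zero by auto
  then have "spl h = 0" "spr h = 0" using DE_inj x Uset_iff by blast+
  then show "h = 0" using spl_spr_eq[of h 0] by (simp add: spl_def spr_def zero_prod_def)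
qed

lemma euler_deriv:
  assumes x: "x \<in> Uset"
  shows "\<exists>D. (euler_map has_derivative D) (at x) \<and> inj D"
proof -
  obtain DP where DP: "(Psi has_derivative DP) (at (G x))" using Psi_deriv by blast
  have D: "(euler_map has_derivative (\<lambda>h. DP (DG x h))) (at x)"
    unfolding euler_Psi by (rule has_derivative_compose[OF G_deriv DP])
  have RP1: "((\<lambda>z. R (Psi z)) has_derivative (\<lambda>k. R (DP k))) (at (G x))"
    by (rule bounded_linear.has_derivative[OF R_linear DP])
  have RP2: "((\<lambda>z. R (Psi z)) has_derivative (\<lambda>k. k)) (at (G x))"
    unfolding R_Psi by (rule has_derivative_ident)
  have RD: "(\<lambda>k. R (DP k)) = (\<lambda>k. k)" by (rule has_derivative_unique[OF RP1 RP2])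
  have lin: "linear (\<lambda>h. DP (DG x h))" using D has_derivative_linear by blast
  have "inj (\<lambda>h. DP (DG x h))"
    unfolding linear_injective_0[OF lin]
  proof (intro allI impI)
    fix h assume "DP (DG x h) = 0"
    then have "R (DP (DG x h)) = R 0" by simp
    then have "DG x h = 0" using RD linear_0[OF bounded_linear.linear[OF R_linear]] by (metis)
    then show "h = 0" using DG_inj x by blast
  qed
  then show ?thesis using D by blast
qed

lemma euler_cont: "continuous_on S euler_map"
proof -
  have "continuous (at x) euler_map" for x
  proof -
    obtain DP where DP: "(Psi has_derivative DP) (at (G x))" using Psi_deriv by blast
    have D: "(euler_map has_derivative (\<lambda>h. DP (DG x h))) (at x)"
      unfolding euler_Psi by (rule has_derivative_compose[OF G_deriv DP])
    then show ?thesis by (rule has_derivative_continuous)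
  qed
  then show ?thesis by (simp add: continuous_at_imp_continuous_on)
qed


lemma compact_param_box: "compact param_box"
  unfolding param_box_def by (intro compact_Times compact_Icc)

theorem lemma3p1:
  shows "euler_map ` param_box = Khat \<and>
    (\<exists>U. open U \<and> U \<subseteq> param_box \<and> param_box - U \<in> null_sets lborel \<and>
         inj_on euler_map U \<and>
         openin (top_of_set Khat) (euler_map ` U) \<and>
         (\<exists>g. homeomorphism U (euler_map ` U) euler_map g) \<and>
         (\<forall>x\<in>U. \<exists>D. (euler_map has_derivative D) (at x) \<and> inj D))"
proof -
  let ?f = euler_map and ?K = param_box and ?U = Uset
  have inj: "inj_on ?f ?U"
    unfolding inj_on_def using sat Uset_sub by blast
  have sat': "\<And>p u. p \<in> ?K \<Longrightarrow> u \<in> ?U \<Longrightarrow> ?f p = ?f u \<Longrightarrow> p = u" using sat by blast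
  have closedmap: "closedin (top_of_set (?f ` ?U)) (?f ` C)" if C: "closedin (top_of_set ?U) C" for C
  proof -
    obtain T where T: "closed T" "C = ?U \<inter> T" using C closedin_closed by blast
    have eq: "?f ` C = ?f ` ?U \<inter> ?f ` (?K \<inter> T)"
    proof
      show "?f ` C \<subseteq> ?f ` ?U \<inter> ?f ` (?K \<inter> T)" using T Uset_sub by blast
      show "?f ` ?U \<inter> ?f ` (?K \<inter> T) \<subseteq> ?f ` C"
      proof
        fix y assume "y \<in> ?f ` ?U \<inter> ?f ` (?K \<inter> T)"
        then obtain u k where u: "u \<in> ?U" "y = ?f u" and k: "k \<in> ?K" "k \<in> T" "y = ?f k" by blast
        have "?f k = ?f u" using k(3) u(2) by simp
        then have "k = u" using sat'[of k u] k(1) u(1) by blast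
        then show "y \<in> ?f ` C" using T u k by blast
      qed
    qed
    have "compact (?K \<inter> T)" using compact_param_box T(1) by (rule compact_Int_closed)
    then have "compact (?f ` (?K \<inter> T))" by (rule compact_continuous_image[OF euler_cont])
    then have "closed (?f ` (?K \<inter> T))" by (rule compact_imp_closed)
    then show ?thesis unfolding eq by (rule closedin_closed_Int)
  qed
  obtain g where hom: "homeomorphism ?U (?f ` ?U) ?f g"
    using homeomorphism_injective_closed_map[OF euler_cont refl inj closedmap] by blast
  have openim: "openin (top_of_set Khat) (?f ` ?U)"
  proof -
    have "compact (?K - ?U)" using compact_param_box open_Uset by (rule compact_diff)
    then have "compact (?f ` (?K - ?U))" by (rule compact_continuous_image[OF euler_cont])
    then have cl: "closed (?f ` (?K - ?U))" by (rule compact_imp_closed)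
    have eq: "?f ` ?U = Khat \<inter> - (?f ` (?K - ?U))"
    proof
      show "?f ` ?U \<subseteq> Khat \<inter> - (?f ` (?K - ?U))"
      proof
        fix y assume "y \<in> ?f ` ?U"
        then obtain u where u: "u \<in> ?U" "y = ?f u" by blast
        have "y \<in> Khat" using u Uset_sub Khat_eq by blast
        moreover have "y \<notin> ?f ` (?K - ?U)"
        proof
          assume "y \<in> ?f ` (?K - ?U)"
          then obtain k where k: "k \<in> ?K - ?U" "y = ?f k" by (rule imageE)
          have "?f k = ?f u" using k(2) u(2) by simp
          then have "k = u" using sat'[of k u] k(1) u(1) by blast
          then show False using k(1) u(1) by blast
        qed
        ultimately show "y \<in> Khat \<inter> - (?f ` (?K - ?U))" by blast
      qed
      show "Khat \<inter> - (?f ` (?K - ?U)) \<subseteq> ?f ` ?U"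
        unfolding Khat_eq[symmetric] by blast
    qed
    show ?thesis unfolding eq using cl by (intro openin_open_Int) (simp add: open_Compl)
  qed
  show ?thesis
    using Khat_eq open_Uset Uset_sub null_diff inj openim hom euler_deriv by blast
qed


end
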